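(* Let $\mathcal{E}:\mathcal{S}(\mathcal{H}_1)\otimes\mathcal{S}(\mathcal{H}_2)\to\mathcal{S}(\mathcal{H}_1)$, with $\mathcal{H}_1$ the space of $n$ qubits, be any channel that commutes with the dephasing map, $\mathcal{E}\circ\Delta=\Delta\circ\mathcal{E}$, where $\Delta(\rho)=\sum_x|x\rangle\langle x|\rho|x\rangle\langle x|$. For a state $\tau\in\mathcal{S}(\mathcal{H}_2)$ define $\mathcal{E}_\tau(\rho):=\mathcal{E}(\rho\otimes\tau)$. Then for all states $\tau$, $\mathcal{D}\big(\mathcal{E}_\tau,H^{\otimes n}\big)\ge 1-\frac{1}{2^n}$.
   Context: $\mathcal{D}$ is the induced trace distance on channels, $\mathcal{D}(\mathcal{E},\mathcal{V})=\max_\rho\tfrac12\|\mathcal{E}(\rho)-\mathcal{V}(\rho)\|_1$, and $H^{\otimes n}$ denotes the channel $\rho\mapsto H^{\otimes n}\rho H^{\otimes n}$. *)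

theory Defs
  imports "Jordan_Normal_Form.Jordan_Normal_Form" "Jordan_Normal_Form.Schur_Decomposition"
begin

definition kron :: "complex mat \<Rightarrow> complex mat \<Rightarrow> complex mat" where
  "kron A B = mat (dim_row A * dim_row B) (dim_col A * dim_col B)
     (\<lambda>(i,j). A $$ (i div dim_row B, j div dim_col B) * B $$ (i mod dim_row B, j mod dim_col B))"

definition psd :: "nat \<Rightarrow> complex mat \<Rightarrow> bool" where
  "psd d A \<longleftrightarrow> A \<in> carrier_mat d d \<and> mat_adjoint A = A \<and>
     (\<forall>v \<in> carrier_vec d. 0 \<le> Re (\<Sum>i<d. \<Sum>j<d. cnj (v $ i) * A $$ (i,j) * v $ j))"

definition mtrace :: "complex mat \<Rightarrow> complex" where
  "mtrace A = (\<Sum>i<dim_row A. A $$ (i,i))"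

definition density :: "nat \<Rightarrow> complex mat \<Rightarrow> bool" where
  "density d \<rho> \<longleftrightarrow> psd d \<rho> \<and> mtrace \<rho> = 1"

text \<open>Trace norm = sum of singular values, i.e. the sum (with algebraic multiplicity)
  of the square roots of the eigenvalues of A^dagger A.\<close>
definition trace_norm :: "complex mat \<Rightarrow> real" where
  "trace_norm A = (let p = char_poly (mat_adjoint A * A) in
      \<Sum>z\<in>{x. poly p x = 0}. real (Polynomial.order z p) * sqrt (Re z))"

definition mat_sum_list :: "nat \<Rightarrow> nat \<Rightarrow> complex mat list \<Rightarrow> complex mat" where
  "mat_sum_list r c Ms = foldr (+) Ms (0\<^sub>m r c)"

definition channel :: "nat \<Rightarrow> nat \<Rightarrow> (complex mat \<Rightarrow> complex mat) \<Rightarrow> bool" where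
  "channel din dout E \<longleftrightarrow> (\<exists>Ks. (\<forall>K\<in>set Ks. K \<in> carrier_mat dout din) \<and>
      mat_sum_list din din (map (\<lambda>K. mat_adjoint K * K) Ks) = 1\<^sub>m din \<and>
      (\<forall>X \<in> carrier_mat din din. E X = mat_sum_list dout dout (map (\<lambda>K. K * X * mat_adjoint K) Ks)))"

definition dephase :: "nat \<Rightarrow> complex mat \<Rightarrow> complex mat" where
  "dephase d X = mat d d (\<lambda>(i,j). if i = j then X $$ (i,i) else 0)"

definition chan_dist :: "nat \<Rightarrow> (complex mat \<Rightarrow> complex mat) \<Rightarrow> (complex mat \<Rightarrow> complex mat) \<Rightarrow> real" where
  "chan_dist d E V = Sup {trace_norm (E \<rho> - V \<rho>) / 2 | \<rho>. density d \<rho>}"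

definition hadamard :: "complex mat" where
  "hadamard = mat 2 2 (\<lambda>(i,j). (if i = 1 \<and> j = 1 then -1 else 1) / complex_of_real (sqrt 2))"

fun hadamard_pow :: "nat \<Rightarrow> complex mat" where
  "hadamard_pow 0 = 1\<^sub>m 1"
| "hadamard_pow (Suc n) = kron hadamard (hadamard_pow n)"

end

theory Submission
  imports Defs
begin

lemma sum_split_prod: "(\<Sum>k<(a::nat)*b. f k) = (\<Sum>i<a. \<Sum>j<b. f (i*b+j))"
proof -
  have "(\<Sum>k<a*b. f k) = (\<Sum>i<a. \<Sum>k\<in>{i*b..<i*b+b}. f k)"
    by (rule sum.nat_group[symmetric])
  also have "\<dots> = (\<Sum>i<a. \<Sum>j<b. f (i*b+j))"
  proof (rule sum.cong[OF refl])
    fix i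
    show "(\<Sum>k\<in>{i*b..<i*b+b}. f k) = (\<Sum>j<b. f (i*b+j))"
      using sum.shift_bounds_nat_ivl[of f 0 "i*b" b]
      by (simp add: lessThan_atLeast0 add.commute)
  qed
  finally show ?thesis .
qed

lemma adj_eq: "mat_adjoint A = mat (dim_col A) (dim_row A) (\<lambda>(i,j). cnj (A $$ (j,i)))"
  by (rule eq_matI) (auto simp: mat_adjoint_def mat_of_rows_def)

lemma adj_dim1[simp]: "dim_row (mat_adjoint (A::complex mat)) = dim_col A"
  unfolding adj_eq by simp
lemma adj_dim2[simp]: "dim_col (mat_adjoint (A::complex mat)) = dim_row A"
  unfolding adj_eq by simp

lemma adj_index[simp]: "i < dim_col (A::complex mat) \<Longrightarrow> j < dim_row A \<Longrightarrow> mat_adjoint A $$ (i,j) = cnj (A $$ (j,i))"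
  by (auto simp: adj_eq)

lemma adj_carrier[simp]: "(A::complex mat) \<in> carrier_mat r c \<Longrightarrow> mat_adjoint A \<in> carrier_mat c r"
  unfolding carrier_mat_def by simp

lemma adj_adj[simp]: "mat_adjoint (mat_adjoint A) = (A::complex mat)"
  by (rule eq_matI) simp_all

lemma mult_entry: "A \<in> carrier_mat a b \<Longrightarrow> B \<in> carrier_mat b c \<Longrightarrow> i < a \<Longrightarrow> j < c \<Longrightarrow>
  (A * B) $$ (i,j) = (\<Sum>k<b. A $$ (i,k) * B $$ (k,j))"
  by (auto simp: scalar_prod_def lessThan_atLeast0 intro!: sum.cong)

lemma mult3_entry: "A \<in> carrier_mat a b \<Longrightarrow> B \<in> carrier_mat b c \<Longrightarrow> C \<in> carrier_mat c d \<Longrightarrow> i < a \<Longrightarrow> j < d \<Longrightarrow>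
  (A * B * C) $$ (i,j) = (\<Sum>l<b. \<Sum>m<c. A $$ (i,l) * B $$ (l,m) * C $$ (m,j))"
proof -
  assume AB: "A \<in> carrier_mat a b" "B \<in> carrier_mat b c" "C \<in> carrier_mat c d" "i < a" "j < d"
  have "(A * B * C) $$ (i,j) = (\<Sum>m<c. (A*B) $$ (i,m) * C $$ (m,j))"
    using AB by (intro mult_entry) auto
  also have "\<dots> = (\<Sum>m<c. \<Sum>l<b. A $$ (i,l) * B $$ (l,m) * C $$ (m,j))"
  proof (rule sum.cong[OF refl])
    fix m assume "m \<in> {..<c}"
    then show "(A*B) $$ (i,m) * C $$ (m,j) = (\<Sum>l<b. A $$ (i,l) * B $$ (l,m) * C $$ (m,j))"
      using AB by (simp add: mult_entry[OF AB(1) AB(2)] sum_distrib_right del: index_mult_mat)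
  qed
  also have "\<dots> = (\<Sum>l<b. \<Sum>m<c. A $$ (i,l) * B $$ (l,m) * C $$ (m,j))"
    by (rule sum.swap)
  finally show ?thesis .
qed

lemma adj_mult: "(A::complex mat) \<in> carrier_mat a b \<Longrightarrow> B \<in> carrier_mat b c \<Longrightarrow>
   mat_adjoint (A*B) = mat_adjoint B * mat_adjoint A"
proof (rule eq_matI)
  assume A: "A \<in> carrier_mat a b" and B: "B \<in> carrier_mat b c"
  fix i j assume i: "i < dim_row (mat_adjoint B * mat_adjoint A)" and j: "j < dim_col (mat_adjoint B * mat_adjoint A)"
  then have ij: "i < c" "j < a" using A B by auto
  have "mat_adjoint (A*B) $$ (i,j) = cnj ((A*B) $$ (j,i))" using A B ij by simp
  also have "\<dots> = cnj (\<Sum>k<b. A $$ (j,k) * B $$ (k,i))" by (simp add: mult_entry[OF A B ij(2) ij(1)] del: index_mult_mat)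
  also have "\<dots> = (\<Sum>k<b. mat_adjoint B $$ (i,k) * mat_adjoint A $$ (k,j))"
    using A B ij by (simp add: mult.commute)
  also have "\<dots> = (mat_adjoint B * mat_adjoint A) $$ (i,j)"
    by (rule mult_entry[symmetric]) (use A B ij in auto)
  finally show "mat_adjoint (A*B) $$ (i,j) = (mat_adjoint B * mat_adjoint A) $$ (i,j)" .
qed auto

lemma adj_add: "(A::complex mat) \<in> carrier_mat a b \<Longrightarrow> B \<in> carrier_mat a b \<Longrightarrow>
   mat_adjoint (A+B) = mat_adjoint A + mat_adjoint B"
  by (rule eq_matI) simp_all

lemma adj_minus: "(A::complex mat) \<in> carrier_mat a b \<Longrightarrow> B \<in> carrier_mat a b \<Longrightarrow>
   mat_adjoint (A-B) = mat_adjoint A - mat_adjoint B"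
  by (rule eq_matI) simp_all

lemma adj_one[simp]: "mat_adjoint (1\<^sub>m n) = (1\<^sub>m n :: complex mat)"
  by (rule eq_matI) simp_all

lemma adj_zero[simp]: "mat_adjoint (0\<^sub>m a b) = (0\<^sub>m b a :: complex mat)"
  by (rule eq_matI) simp_all

lemma kron_dim1[simp]: "dim_row (kron A B) = dim_row A * dim_row B"
  unfolding kron_def by simp
lemma kron_dim2[simp]: "dim_col (kron A B) = dim_col A * dim_col B"
  unfolding kron_def by simp
lemma kron_index[simp]: "i < dim_row A * dim_row B \<Longrightarrow> j < dim_col A * dim_col B \<Longrightarrow>
  kron A B $$ (i,j) = A $$ (i div dim_row B, j div dim_col B) * B $$ (i mod dim_row B, j mod dim_col B)"
  unfolding kron_def by simp
lemma kron_carrier: "A \<in> carrier_mat ra ca \<Longrightarrow> B \<in> carrier_mat rb cb \<Longrightarrow> kron A B \<in> carrier_mat (ra*rb) (ca*cb)"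
  unfolding carrier_mat_def by simp

lemma div_mod_bound: "(i::nat) < a * b \<Longrightarrow> i div b < a \<and> i mod b < b"
  by (metis less_mult_imp_div_less mod_less_divisor mult_zero_right nat_neq_iff not_less_zero)

lemma kron_mult:
  assumes A: "A \<in> carrier_mat ra ca" and B: "B \<in> carrier_mat rb cb"
    and C: "C \<in> carrier_mat ca cc" and D: "D \<in> carrier_mat cb cd"
  shows "kron A B * kron C D = kron (A*C) (B*D)"
proof (rule eq_matI)
  fix i j assume i: "i < dim_row (kron (A*C) (B*D))" and j: "j < dim_col (kron (A*C) (B*D))"
  then have i': "i < ra*rb" and j': "j < cc*cd" using A B C D by auto
  note ib = div_mod_bound[OF i'] and jb = div_mod_bound[OF j']
  have AB: "kron A B \<in> carrier_mat (ra*rb) (ca*cb)" using kron_carrier[OF A B] .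
  have CD: "kron C D \<in> carrier_mat (ca*cb) (cc*cd)" using kron_carrier[OF C D] .
  have "(kron A B * kron C D) $$ (i,j) = (\<Sum>k<ca*cb. kron A B $$ (i,k) * kron C D $$ (k,j))"
    by (rule mult_entry[OF AB CD i' j'])
  also have "\<dots> = (\<Sum>a<ca. \<Sum>b<cb. kron A B $$ (i,a*cb+b) * kron C D $$ (a*cb+b,j))"
    by (rule sum_split_prod)
  also have "\<dots> = (\<Sum>a<ca. \<Sum>b<cb. (A $$ (i div rb, a) * C $$ (a, j div cd)) * (B $$ (i mod rb, b) * D $$ (b, j mod cd)))"
  proof (intro sum.cong refl)
    fix a b assume a: "a \<in> {..<ca}" and b: "b \<in> {..<cb}"
    then have k: "a*cb+b < ca*cb"
      by (metis lessThan_iff add.commute add_less_cancel_left less_le_trans mult_Suc mult_le_mono1 Suc_leI)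
    have dm: "(a*cb+b) div cb = a" "(a*cb+b) mod cb = b" using b by auto
    show "kron A B $$ (i,a*cb+b) * kron C D $$ (a*cb+b,j) =
      (A $$ (i div rb, a) * C $$ (a, j div cd)) * (B $$ (i mod rb, b) * D $$ (b, j mod cd))"
      using A B C D i' j' k dm by (simp add: ac_simps)
  qed
  also have "\<dots> = (\<Sum>a<ca. A $$ (i div rb, a) * C $$ (a, j div cd)) * (\<Sum>b<cb. B $$ (i mod rb, b) * D $$ (b, j mod cd))"
    by (simp add: sum_product)
  also have "\<dots> = (A*C) $$ (i div rb, j div cd) * (B*D) $$ (i mod rb, j mod cd)"
    using mult_entry[OF A C] mult_entry[OF B D] ib jb by (simp del: index_mult_mat)
  also have "\<dots> = kron (A*C) (B*D) $$ (i,j)"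
    using A B C D i' j' by simp
  finally show "(kron A B * kron C D) $$ (i,j) = kron (A*C) (B*D) $$ (i,j)" .
qed (use A B C D in simp_all)

lemma kron_one: "kron (1\<^sub>m a) (1\<^sub>m b) = (1\<^sub>m (a*b) :: complex mat)"
proof (rule eq_matI)
  fix i j assume "i < dim_row (1\<^sub>m (a*b) :: complex mat)" "j < dim_col (1\<^sub>m (a*b) :: complex mat)"
  then have i: "i < a*b" and j: "j < a*b" by auto
  note ib = div_mod_bound[OF i] and jb = div_mod_bound[OF j]
  have "(i = j) = (i div b = j div b \<and> i mod b = j mod b)"
    by (metis div_mult_mod_eq)
  then show "kron (1\<^sub>m a) (1\<^sub>m b) $$ (i,j) = (1\<^sub>m (a*b) :: complex mat) $$ (i,j)"
    using i j ib jb by simp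
qed simp_all

lemma adj_kron: "mat_adjoint (kron A B) = kron (mat_adjoint A) (mat_adjoint B)"
proof (rule eq_matI)
  fix i j assume i: "i < dim_row (kron (mat_adjoint A) (mat_adjoint B))"
    and j: "j < dim_col (kron (mat_adjoint A) (mat_adjoint B))"
  then have i': "i < dim_col A * dim_col B" and j': "j < dim_row A * dim_row B" by simp_all
  note ib = div_mod_bound[OF i'] and jb = div_mod_bound[OF j']
  show "mat_adjoint (kron A B) $$ (i,j) = kron (mat_adjoint A) (mat_adjoint B) $$ (i,j)"
    using i' j' ib jb by simp
qed simp_all

lemma mtrace_kron: "A \<in> carrier_mat a a \<Longrightarrow> B \<in> carrier_mat b b \<Longrightarrow> mtrace (kron A B) = mtrace A * mtrace B"
proof -
  assume A: "A \<in> carrier_mat a a" and B: "B \<in> carrier_mat b b"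
  have "mtrace (kron A B) = (\<Sum>k<a*b. kron A B $$ (k,k))" using A B by (simp add: mtrace_def)
  also have "\<dots> = (\<Sum>i<a. \<Sum>j<b. kron A B $$ (i*b+j,i*b+j))" by (rule sum_split_prod)
  also have "\<dots> = (\<Sum>i<a. \<Sum>j<b. A $$ (i,i) * B $$ (j,j))"
  proof (intro sum.cong refl)
    fix i j assume a: "i \<in> {..<a}" and b: "j \<in> {..<b}"
    then have k: "i*b+j < a*b"
      by (metis lessThan_iff add.commute add_less_cancel_left less_le_trans mult_Suc mult_le_mono1 Suc_leI)
    have dm: "(i*b+j) div b = i" "(i*b+j) mod b = j" using b by auto
    show "kron A B $$ (i*b+j,i*b+j) = A $$ (i,i) * B $$ (j,j)" using A B k dm by simp
  qed
  also have "\<dots> = mtrace A * mtrace B" using A B by (simp add: mtrace_def sum_product)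
  finally show ?thesis .
qed

lemma dephase_kron: "A \<in> carrier_mat a a \<Longrightarrow> B \<in> carrier_mat b b \<Longrightarrow>
  dephase (a*b) (kron A B) = kron (dephase a A) (dephase b B)"
proof -
  assume A: "A \<in> carrier_mat a a" and B: "B \<in> carrier_mat b b"
  show ?thesis
  proof (rule eq_matI)
    fix i j assume "i < dim_row (kron (dephase a A) (dephase b B))" "j < dim_col (kron (dephase a A) (dephase b B))"
    then have i: "i < a*b" and j: "j < a*b" by (simp_all add: dephase_def)
    note ib = div_mod_bound[OF i] and jb = div_mod_bound[OF j]
    have e: "(i = j) = (i div b = j div b \<and> i mod b = j mod b)"
      by (metis div_mult_mod_eq)
    show "dephase (a*b) (kron A B) $$ (i,j) = kron (dephase a A) (dephase b B) $$ (i,j)"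
      using i j ib jb A B e by (auto simp: dephase_def)
  qed (simp_all add: dephase_def)
qed

lemma had_carrier: "hadamard \<in> carrier_mat 2 2"
  unfolding hadamard_def carrier_mat_def by simp

lemma had_index: "i < 2 \<Longrightarrow> j < 2 \<Longrightarrow> hadamard $$ (i,j) = (if i = 1 \<and> j = 1 then -1 else 1) / complex_of_real (sqrt 2)"
  unfolding hadamard_def by simp

lemma sqrt2_sq: "complex_of_real (sqrt 2) * complex_of_real (sqrt 2) = 2"
  unfolding of_real_mult[symmetric] by simp

lemma had_adj: "mat_adjoint hadamard = hadamard"
  by (rule eq_matI) (auto simp: hadamard_def)

lemma less2: "(i::nat) < 2 \<longleftrightarrow> i = 0 \<or> i = 1" by auto

lemma had_sq: "hadamard * hadamard = 1\<^sub>m 2"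
proof (rule eq_matI)
  fix i j assume "i < dim_row (1\<^sub>m 2 :: complex mat)" "j < dim_col (1\<^sub>m 2 :: complex mat)"
  then have i: "i < 2" and j: "j < 2" by auto
  have "(hadamard * hadamard) $$ (i,j) = (\<Sum>k<2. hadamard $$ (i,k) * hadamard $$ (k,j))"
    by (rule mult_entry[OF had_carrier had_carrier i j])
  also have "\<dots> = hadamard $$ (i,0) * hadamard $$ (0,j) + hadamard $$ (i,1) * hadamard $$ (1,j)"
    by (simp add: numeral_2_eq_2)
  also have "\<dots> = (1\<^sub>m 2 :: complex mat) $$ (i,j)"
    using i j unfolding less2 using sqrt2_sq
    by (auto simp: had_index field_simps)
  finally show "(hadamard * hadamard) $$ (i,j) = (1\<^sub>m 2 :: complex mat) $$ (i,j)" .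
qed (simp_all add: hadamard_def)

lemma had_abs: "i < 2 \<Longrightarrow> j < 2 \<Longrightarrow> hadamard $$ (i,j) * cnj (hadamard $$ (i,j)) = 1/2"
  using sqrt2_sq by (auto simp: had_index field_simps)

lemma hp_carrier: "hadamard_pow n \<in> carrier_mat (2^n) (2^n)"
proof (induction n)
  case 0 then show ?case by simp
next
  case (Suc n) then show ?case using kron_carrier[OF had_carrier Suc.IH] by simp
qed

lemma hp_adj: "mat_adjoint (hadamard_pow n) = hadamard_pow n"
  by (induction n) (simp_all add: adj_kron had_adj)

lemma hp_sq: "hadamard_pow n * hadamard_pow n = 1\<^sub>m (2^n)"
proof (induction n)
  case 0 then show ?case by simp
next
  case (Suc n)
  have "hadamard_pow (Suc n) * hadamard_pow (Suc n) = kron (hadamard * hadamard) (hadamard_pow n * hadamard_pow n)"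
    by (simp add: kron_mult[OF had_carrier hp_carrier had_carrier hp_carrier])
  also have "\<dots> = 1\<^sub>m (2^Suc n)" using Suc.IH had_sq kron_one[of 2 "2^n"] by simp
  finally show ?case .
qed

lemma hp_abs: "i < 2^n \<Longrightarrow> j < 2^n \<Longrightarrow> hadamard_pow n $$ (i,j) * cnj (hadamard_pow n $$ (i,j)) = 1/2^n"
proof (induction n arbitrary: i j)
  case 0 then show ?case by simp
next
  case (Suc n)
  have d: "dim_row (hadamard_pow n) = 2^n" "dim_col (hadamard_pow n) = 2^n" using hp_carrier[of n] by auto
  have i: "i < 2 * 2^n" and j: "j < 2 * 2^n" using Suc.prems by auto
  note ib = div_mod_bound[OF i] and jb = div_mod_bound[OF j]
  have "hadamard_pow (Suc n) $$ (i,j) = hadamard $$ (i div 2^n, j div 2^n) * hadamard_pow n $$ (i mod 2^n, j mod 2^n)"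
    using i j d had_carrier by simp
  then have "hadamard_pow (Suc n) $$ (i,j) * cnj (hadamard_pow (Suc n) $$ (i,j)) =
     (hadamard $$ (i div 2^n, j div 2^n) * cnj (hadamard $$ (i div 2^n, j div 2^n))) *
     (hadamard_pow n $$ (i mod 2^n, j mod 2^n) * cnj (hadamard_pow n $$ (i mod 2^n, j mod 2^n)))"
    by (simp add: ac_simps)
  also have "\<dots> = 1/2 * (1/2^n)"
  proof -
    have h1: "hadamard $$ (i div 2^n, j div 2^n) * cnj (hadamard $$ (i div 2^n, j div 2^n)) = 1/2"
      using had_abs ib jb by blast
    have h2: "hadamard_pow n $$ (i mod 2^n, j mod 2^n) * cnj (hadamard_pow n $$ (i mod 2^n, j mod 2^n)) = 1/2^n"
      using Suc.IH ib jb by blast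
    show ?thesis unfolding h1 h2 ..
  qed
  finally show ?case by simp
qed

lemma msl_carrier: "(\<forall>M\<in>set Ms. M \<in> carrier_mat r c) \<Longrightarrow> mat_sum_list r c Ms \<in> carrier_mat r c"
  by (induction Ms) (auto simp: mat_sum_list_def)

lemma msl_index_list: "(\<forall>M\<in>set Ms. M \<in> carrier_mat r c) \<Longrightarrow> i < r \<Longrightarrow> j < c \<Longrightarrow>
   mat_sum_list r c Ms $$ (i,j) = sum_list (map (\<lambda>M. M $$ (i,j)) Ms)"
proof (induction Ms)
  case Nil then show ?case by (simp add: mat_sum_list_def)
next
  case (Cons M Ms)
  have c: "mat_sum_list r c Ms \<in> carrier_mat r c" using Cons.prems by (intro msl_carrier) auto
  have "mat_sum_list r c (M # Ms) = M + mat_sum_list r c Ms" by (simp add: mat_sum_list_def)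
  then show ?case using Cons c by simp
qed

lemma msl_index: "(\<forall>M\<in>set Ms. M \<in> carrier_mat r c) \<Longrightarrow> i < r \<Longrightarrow> j < c \<Longrightarrow>
   mat_sum_list r c Ms $$ (i,j) = (\<Sum>k<length Ms. (Ms ! k) $$ (i,j))"
  by (simp add: msl_index_list sum_list_sum_nth lessThan_atLeast0)

lemma kxk_carrier: "(K::complex mat) \<in> carrier_mat a b \<Longrightarrow> X \<in> carrier_mat b b \<Longrightarrow> K * X * mat_adjoint K \<in> carrier_mat a a"
  by (meson adj_carrier mult_carrier_mat)
lemma kk_carrier: "(K::complex mat) \<in> carrier_mat a b \<Longrightarrow> mat_adjoint K * K \<in> carrier_mat b b"
  by (meson adj_carrier mult_carrier_mat)

lemma kraus_entry:
  assumes Ks: "\<forall>K\<in>set Ks. K \<in> carrier_mat dout din" and X: "X \<in> carrier_mat din din"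
    and i: "i < dout" and j: "j < dout"
  shows "mat_sum_list dout dout (map (\<lambda>K. K * X * mat_adjoint K) Ks) $$ (i,j) =
     (\<Sum>k<length Ks. \<Sum>l<din. \<Sum>m<din. (Ks!k) $$ (i,l) * X $$ (l,m) * cnj ((Ks!k) $$ (j,m)))"
proof -
  have c: "\<forall>M\<in>set (map (\<lambda>K. K * X * mat_adjoint K) Ks). M \<in> carrier_mat dout dout"
    using Ks X kxk_carrier by auto
  show ?thesis
    unfolding msl_index[OF c i j]
  proof (rule sum.cong)
    fix k assume k: "k \<in> {..<length Ks}"
    then have K: "Ks!k \<in> carrier_mat dout din" using Ks by auto
    have "(map (\<lambda>K. K * X * mat_adjoint K) Ks ! k) $$ (i,j) = (Ks!k * X * mat_adjoint (Ks!k)) $$ (i,j)"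
      using k by simp
    also have "\<dots> = (\<Sum>l<din. \<Sum>m<din. (Ks!k) $$ (i,l) * X $$ (l,m) * mat_adjoint (Ks!k) $$ (m,j))"
      by (rule mult3_entry[OF K X adj_carrier[OF K] i j])
    also have "\<dots> = (\<Sum>l<din. \<Sum>m<din. (Ks!k) $$ (i,l) * X $$ (l,m) * cnj ((Ks!k) $$ (j,m)))"
      using K j by (intro sum.cong refl) simp
    finally show "(map (\<lambda>K. K * X * mat_adjoint K) Ks ! k) $$ (i,j) =
      (\<Sum>l<din. \<Sum>m<din. (Ks!k) $$ (i,l) * X $$ (l,m) * cnj ((Ks!k) $$ (j,m)))" .
  qed simp
qed

lemma kraus_norm_entry:
  assumes Ks: "\<forall>K\<in>set Ks. K \<in> carrier_mat dout din"
    and norm: "mat_sum_list din din (map (\<lambda>K. mat_adjoint K * K) Ks) = 1\<^sub>m din"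
    and m: "m < din" and l: "l < din"
  shows "(\<Sum>k<length Ks. \<Sum>i<dout. cnj ((Ks!k) $$ (i,m)) * (Ks!k) $$ (i,l)) = (if m = l then 1 else 0)"
proof -
  have c: "\<forall>M\<in>set (map (\<lambda>K. mat_adjoint K * K) Ks). M \<in> carrier_mat din din"
    using Ks kk_carrier by auto
  have "(if m = l then 1 else 0) = mat_sum_list din din (map (\<lambda>K. mat_adjoint K * K) Ks) $$ (m,l)"
    using m l by (simp add: norm)
  also have "\<dots> = (\<Sum>k<length Ks. \<Sum>i<dout. cnj ((Ks!k) $$ (i,m)) * (Ks!k) $$ (i,l))"
    unfolding msl_index[OF c m l]
  proof (rule sum.cong)
    fix k assume k: "k \<in> {..<length Ks}"
    then have K: "Ks!k \<in> carrier_mat dout din" using Ks by auto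
    have "(map (\<lambda>K. mat_adjoint K * K) Ks ! k) $$ (m,l) = (mat_adjoint (Ks!k) * Ks!k) $$ (m,l)"
      using k by simp
    also have "\<dots> = (\<Sum>i<dout. mat_adjoint (Ks!k) $$ (m,i) * (Ks!k) $$ (i,l))"
      by (rule mult_entry[OF adj_carrier[OF K] K m l])
    also have "\<dots> = (\<Sum>i<dout. cnj ((Ks!k) $$ (i,m)) * (Ks!k) $$ (i,l))"
      using K m by (intro sum.cong refl) simp
    finally show "(map (\<lambda>K. mat_adjoint K * K) Ks ! k) $$ (m,l) = (\<Sum>i<dout. cnj ((Ks!k) $$ (i,m)) * (Ks!k) $$ (i,l))" .
  qed simp
  finally show ?thesis by simp
qed

lemma kraus_trace:
  assumes Ks: "\<forall>K\<in>set Ks. K \<in> carrier_mat dout din"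
    and norm: "mat_sum_list din din (map (\<lambda>K. mat_adjoint K * K) Ks) = 1\<^sub>m din"
    and X: "X \<in> carrier_mat din din"
  shows "mtrace (mat_sum_list dout dout (map (\<lambda>K. K * X * mat_adjoint K) Ks)) = mtrace X"
proof -
  have c: "mat_sum_list dout dout (map (\<lambda>K. K * X * mat_adjoint K) Ks) \<in> carrier_mat dout dout"
    using Ks X kxk_carrier by (intro msl_carrier) auto
  have "mtrace (mat_sum_list dout dout (map (\<lambda>K. K * X * mat_adjoint K) Ks)) =
     (\<Sum>i<dout. \<Sum>k<length Ks. \<Sum>l<din. \<Sum>m<din. (Ks!k) $$ (i,l) * X $$ (l,m) * cnj ((Ks!k) $$ (i,m)))"
    using c kraus_entry[OF Ks X] by (simp add: mtrace_def)
  also have "\<dots> = (\<Sum>l<din. \<Sum>m<din. X $$ (l,m) * (\<Sum>k<length Ks. \<Sum>i<dout. cnj ((Ks!k) $$ (i,m)) * (Ks!k) $$ (i,l)))"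
  proof -
    have "(\<Sum>i<dout. \<Sum>k<length Ks. \<Sum>l<din. \<Sum>m<din. (Ks!k) $$ (i,l) * X $$ (l,m) * cnj ((Ks!k) $$ (i,m)))
      = (\<Sum>k<length Ks. \<Sum>i<dout. \<Sum>l<din. \<Sum>m<din. (Ks!k) $$ (i,l) * X $$ (l,m) * cnj ((Ks!k) $$ (i,m)))"
      by (rule sum.swap)
    also have "\<dots> = (\<Sum>k<length Ks. \<Sum>l<din. \<Sum>m<din. \<Sum>i<dout. (Ks!k) $$ (i,l) * X $$ (l,m) * cnj ((Ks!k) $$ (i,m)))"
      by (simp add: sum.swap[of _ "{..<dout}"])
    also have "\<dots> = (\<Sum>l<din. \<Sum>m<din. \<Sum>k<length Ks. \<Sum>i<dout. (Ks!k) $$ (i,l) * X $$ (l,m) * cnj ((Ks!k) $$ (i,m)))"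
      by (simp add: sum.swap[of _ "{..<length Ks}"])
    also have "\<dots> = (\<Sum>l<din. \<Sum>m<din. X $$ (l,m) * (\<Sum>k<length Ks. \<Sum>i<dout. cnj ((Ks!k) $$ (i,m)) * (Ks!k) $$ (i,l)))"
      by (simp add: sum_distrib_left ac_simps)
    finally show ?thesis .
  qed
  also have "\<dots> = (\<Sum>l<din. \<Sum>m<din. X $$ (l,m) * (if m = l then 1 else 0))"
    using kraus_norm_entry[OF Ks norm] by simp
  also have "\<dots> = (\<Sum>l<din. X $$ (l,l))"
    by (simp add: if_distrib cong: if_cong)
  also have "\<dots> = mtrace X" using X by (simp add: mtrace_def)
  finally show ?thesis .
qed

lemma kraus_herm:
  assumes Ks: "\<forall>K\<in>set Ks. K \<in> carrier_mat dout din"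
    and X: "X \<in> carrier_mat din din" and H: "mat_adjoint X = X"
  shows "mat_adjoint (mat_sum_list dout dout (map (\<lambda>K. K * X * mat_adjoint K) Ks)) =
         mat_sum_list dout dout (map (\<lambda>K. K * X * mat_adjoint K) Ks)"
proof -
  let ?Y = "mat_sum_list dout dout (map (\<lambda>K. K * X * mat_adjoint K) Ks)"
  have c: "?Y \<in> carrier_mat dout dout" using Ks X kxk_carrier by (intro msl_carrier) auto
  have Xc: "\<And>l m. l < din \<Longrightarrow> m < din \<Longrightarrow> cnj (X $$ (l,m)) = X $$ (m,l)"
  proof -
    fix l m assume "l < din" "m < din"
    then have "mat_adjoint X $$ (m,l) = cnj (X $$ (l,m))" using X by simp
    then show "cnj (X $$ (l,m)) = X $$ (m,l)" using H by simp
  qed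
  show ?thesis
  proof (rule eq_matI)
    fix i j assume "i < dim_row ?Y" "j < dim_col ?Y"
    then have i: "i < dout" and j: "j < dout" using c by auto
    have "mat_adjoint ?Y $$ (i,j) = cnj (?Y $$ (j,i))" using c i j by simp
    also have "\<dots> = (\<Sum>k<length Ks. \<Sum>l<din. \<Sum>m<din. cnj ((Ks!k) $$ (j,l)) * cnj (X $$ (l,m)) * (Ks!k) $$ (i,m))"
      unfolding kraus_entry[OF Ks X j i] by (simp add: cnj_sum)
    also have "\<dots> = (\<Sum>k<length Ks. \<Sum>l<din. \<Sum>m<din. (Ks!k) $$ (i,m) * X $$ (m,l) * cnj ((Ks!k) $$ (j,l)))"
      using Xc by (intro sum.cong refl) (simp add: ac_simps)
    also have "\<dots> = (\<Sum>k<length Ks. \<Sum>m<din. \<Sum>l<din. (Ks!k) $$ (i,m) * X $$ (m,l) * cnj ((Ks!k) $$ (j,l)))"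
      by (intro sum.cong refl sum.swap)
    also have "\<dots> = ?Y $$ (i,j)" unfolding kraus_entry[OF Ks X i j] ..
    finally show "mat_adjoint ?Y $$ (i,j) = ?Y $$ (i,j)" .
  qed (use c in simp_all)
qed

lemma kraus_bound:
  assumes Ks: "\<forall>K\<in>set Ks. K \<in> carrier_mat dout din" and X: "X \<in> carrier_mat din din"
    and Xb: "\<And>l m. l < din \<Longrightarrow> m < din \<Longrightarrow> cmod (X $$ (l,m)) \<le> 1"
    and i: "i < dout" and j: "j < dout"
  shows "cmod (mat_sum_list dout dout (map (\<lambda>K. K * X * mat_adjoint K) Ks) $$ (i,j)) \<le>
     (\<Sum>k<length Ks. \<Sum>l<din. \<Sum>m<din. cmod ((Ks!k) $$ (i,l)) * cmod ((Ks!k) $$ (j,m)))"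
  unfolding kraus_entry[OF Ks X i j]
proof -
  have "cmod (\<Sum>k<length Ks. \<Sum>l<din. \<Sum>m<din. (Ks!k) $$ (i,l) * X $$ (l,m) * cnj ((Ks!k) $$ (j,m)))
    \<le> (\<Sum>k<length Ks. \<Sum>l<din. \<Sum>m<din. cmod ((Ks!k) $$ (i,l) * X $$ (l,m) * cnj ((Ks!k) $$ (j,m))))"
  proof -
    have "cmod (\<Sum>k<length Ks. \<Sum>l<din. \<Sum>m<din. (Ks!k) $$ (i,l) * X $$ (l,m) * cnj ((Ks!k) $$ (j,m)))
      \<le> (\<Sum>k<length Ks. cmod (\<Sum>l<din. \<Sum>m<din. (Ks!k) $$ (i,l) * X $$ (l,m) * cnj ((Ks!k) $$ (j,m))))"
      by (rule norm_sum)
    also have "\<dots> \<le> (\<Sum>k<length Ks. \<Sum>l<din. cmod (\<Sum>m<din. (Ks!k) $$ (i,l) * X $$ (l,m) * cnj ((Ks!k) $$ (j,m))))"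
      by (intro sum_mono norm_sum)
    also have "\<dots> \<le> (\<Sum>k<length Ks. \<Sum>l<din. \<Sum>m<din. cmod ((Ks!k) $$ (i,l) * X $$ (l,m) * cnj ((Ks!k) $$ (j,m))))"
      by (intro sum_mono norm_sum)
    finally show ?thesis .
  qed
  also have "\<dots> \<le> (\<Sum>k<length Ks. \<Sum>l<din. \<Sum>m<din. cmod ((Ks!k) $$ (i,l)) * cmod ((Ks!k) $$ (j,m)))"
  proof (intro sum_mono)
    fix k l m assume "l \<in> {..<din}" "m \<in> {..<din}"
    then have "cmod (X $$ (l,m)) \<le> 1" using Xb by auto
    then have h: "cmod (X $$ (l,m)) * cmod ((Ks!k) $$ (j,m)) \<le> cmod ((Ks!k) $$ (j,m))"
      by (intro mult_left_le_one_le) auto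
    show "cmod ((Ks!k) $$ (i,l) * X $$ (l,m) * cnj ((Ks!k) $$ (j,m))) \<le> cmod ((Ks!k) $$ (i,l)) * cmod ((Ks!k) $$ (j,m))"
      using mult_left_mono[OF h, of "cmod ((Ks!k) $$ (i,l))"] by (simp add: norm_mult mult.assoc)
  qed
  finally show "cmod (\<Sum>k<length Ks. \<Sum>l<din. \<Sum>m<din. (Ks!k) $$ (i,l) * X $$ (l,m) * cnj ((Ks!k) $$ (j,m)))
    \<le> (\<Sum>k<length Ks. \<Sum>l<din. \<Sum>m<din. cmod ((Ks!k) $$ (i,l)) * cmod ((Ks!k) $$ (j,m)))" .
qed

lemma sum_delta_l: "(i::nat) < n \<Longrightarrow> (\<Sum>k<n. (if i = k then 1 else 0) * f k) = (f i :: complex)"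
proof -
  assume i: "i < n"
  have "(\<Sum>k<n. (if i = k then 1 else 0) * f k) = (\<Sum>k<n. if i = k then f k else 0)"
    by (intro sum.cong) auto
  then show ?thesis using i by (simp add: sum.delta')
qed
lemma sum_delta_r: "(j::nat) < n \<Longrightarrow> (\<Sum>k<n. f k * (if k = j then 1 else 0)) = (f j :: complex)"
proof -
  assume j: "j < n"
  have "(\<Sum>k<n. f k * (if k = j then 1 else 0)) = (\<Sum>k<n. if k = j then f k else 0)"
    by (intro sum.cong) auto
  then show ?thesis using j by (simp add: sum.delta)
qed

lemma householder:
  fixes u :: "nat \<Rightarrow> complex"
  assumes n: "n = Suc k" and un: "(\<Sum>i<n. u i * cnj (u i)) = 1"
  shows "\<exists>W \<phi>. W \<in> carrier_mat n n \<and> mat_adjoint W = W \<and> W * W = 1\<^sub>m n \<and> (\<forall>i<n. W $$ (i,0) = \<phi> * u i)"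
proof -
  define a where "a = u 0"
  define r where "r = cmod a"
  define \<phi> where "\<phi> = (if a = 0 then 1 else a / complex_of_real r)"
  have r0: "r \<ge> 0" by (simp add: r_def)
  have phi1: "\<phi> * cnj \<phi> = 1"
    using complex_norm_square[of a] by (auto simp: \<phi>_def r_def field_simps power2_eq_square)
  have ca: "cnj a = cnj \<phi> * complex_of_real r"
    by (auto simp: \<phi>_def r_def)
  have pa: "\<phi> * cnj a = complex_of_real r"
    using phi1 ca by (metis mult.assoc mult_1)
  have cpa: "cnj \<phi> * a = complex_of_real r"
    using pa by (metis complex_cnj_cnj complex_cnj_complex_of_real complex_cnj_mult)
  define w where "w i = (if i = 0 then \<phi> else 0) - u i" for i
  define s where "s = (\<Sum>i<n. w i * cnj (w i))"
  define cc where "cc = 2 / s"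
  define W where "W = mat n n (\<lambda>(i,j). (if i = j then 1 else 0) - cc * w i * cnj (w j))"
  have sreal: "cnj s = s" unfolding s_def by (simp add: cnj_sum mult.commute)
  have ccreal: "cnj cc = cc" unfolding cc_def using sreal by simp
  have Wc: "W \<in> carrier_mat n n" unfolding W_def by simp
  have Wi: "\<And>i j. i < n \<Longrightarrow> j < n \<Longrightarrow> W $$ (i,j) = (if i = j then 1 else 0) - cc * w i * cnj (w j)"
    unfolding W_def by simp
  have adjW: "mat_adjoint W = W"
  proof (rule eq_matI)
    fix i j assume "i < dim_row W" "j < dim_col W"
    then have i: "i < n" and j: "j < n" using Wc by auto
    have "mat_adjoint W $$ (i,j) = cnj (W $$ (j,i))" using Wc i j by simp
    also have "\<dots> = W $$ (i,j)" using i j ccreal by (auto simp: Wi)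
    finally show "mat_adjoint W $$ (i,j) = W $$ (i,j)" .
  qed (use Wc in simp_all)
  have cc2: "cc * cc * s = 2 * cc"
    by (cases "s = 0") (simp_all add: cc_def field_simps)
  have WW: "W * W = 1\<^sub>m n"
  proof (rule eq_matI)
    fix i j assume "i < dim_row (1\<^sub>m n :: complex mat)" "j < dim_col (1\<^sub>m n :: complex mat)"
    then have i: "i < n" and j: "j < n" by auto
    have "(W * W) $$ (i,j) = (\<Sum>l<n. W $$ (i,l) * W $$ (l,j))" by (rule mult_entry[OF Wc Wc i j])
    also have "\<dots> = (\<Sum>l<n. (if i = l then 1 else 0) * (if l = j then 1 else 0)
        - (if i = l then 1 else 0) * (cc * w l * cnj (w j))
        - (cc * w i * cnj (w l)) * (if l = j then 1 else 0)
        + (cc * cc * w i * cnj (w j)) * (w l * cnj (w l)))"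
      using i j by (intro sum.cong refl) (simp add: Wi algebra_simps)
    also have "\<dots> = (if i = j then 1 else 0) - cc * w i * cnj (w j) - cc * w i * cnj (w j)
        + cc * cc * w i * cnj (w j) * s"
      using i j by (simp add: sum.distrib sum_subtractf sum_delta_l sum_delta_r sum_distrib_left[symmetric] s_def)
    also have "\<dots> = (if i = j then 1 else 0)"
    proof -
      have "cc * cc * w i * cnj (w j) * s = (cc * cc * s) * w i * cnj (w j)" by (simp add: ac_simps)
      then show ?thesis using cc2 by simp
    qed
    also have "\<dots> = (1\<^sub>m n :: complex mat) $$ (i,j)" using i j by simp
    finally show "(W * W) $$ (i,j) = (1\<^sub>m n :: complex mat) $$ (i,j)" .
  qed (use Wc in simp_all)
  have usplit: "a * cnj a + (\<Sum>i<k. u (Suc i) * cnj (u (Suc i))) = 1"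
    using un unfolding n sum.lessThan_Suc_shift a_def by simp
  have ssplit: "s = w 0 * cnj (w 0) + (\<Sum>i<k. u (Suc i) * cnj (u (Suc i)))"
    unfolding s_def n sum.lessThan_Suc_shift by (simp add: w_def)
  have w0: "w 0 * cnj (w 0) = 1 - 2 * complex_of_real r + a * cnj a"
  proof -
    have "w 0 * cnj (w 0) = \<phi> * cnj \<phi> - \<phi> * cnj a - cnj \<phi> * a + a * cnj a"
      by (simp add: w_def a_def algebra_simps)
    then show ?thesis using phi1 pa cpa by simp
  qed
  have sval: "s = 2 - 2 * complex_of_real r"
    using ssplit w0 usplit by (simp add: algebra_simps)
  have col0: "\<forall>i<n. W $$ (i,0) = cnj \<phi> * u i"
  proof (cases "r = 1")
    case False
    then have s0: "s \<noteq> 0" using sval by auto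
    have cw0: "cnj (w 0) = cnj \<phi> * (1 - complex_of_real r)"
      using ca by (simp add: w_def a_def algebra_simps)
    have key: "cc * cnj (w 0) = cnj \<phi>"
      using s0 False unfolding cc_def cw0 sval by (simp add: field_simps)
    show ?thesis
    proof (intro allI impI)
      fix i assume i: "i < n"
      have "W $$ (i,0) = (if i = 0 then 1 else 0) - w i * (cc * cnj (w 0))"
        using i n by (simp add: Wi ac_simps)
      also have "\<dots> = (if i = 0 then 1 else 0) - w i * cnj \<phi>" unfolding key ..
      also have "\<dots> = cnj \<phi> * u i"
      proof (cases "i = 0")
        case True
        then show ?thesis using phi1 by (simp add: w_def algebra_simps)
      next
        case False
        then show ?thesis by (simp add: w_def)
      qed
      finally show "W $$ (i,0) = cnj \<phi> * u i" .
    qed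
  next
    case True
    then have s0: "s = 0" using sval by simp
    have rest0: "(\<Sum>i<k. u (Suc i) * cnj (u (Suc i))) = 0"
      using usplit True complex_norm_square[of a] unfolding r_def by (simp add: power2_eq_square)
    have "\<forall>i<k. u (Suc i) = 0"
    proof -
      have "(\<Sum>i<k. complex_of_real ((cmod (u (Suc i)))^2)) = (\<Sum>i<k. u (Suc i) * cnj (u (Suc i)))"
        by (intro sum.cong refl, rule complex_norm_square)
      then have "(\<Sum>i<k. complex_of_real ((cmod (u (Suc i)))^2)) = 0"
        using rest0 by simp
      then have "(\<Sum>i<k. (cmod (u (Suc i)))^2) = 0"
        by (simp only: of_real_sum[symmetric] of_real_eq_0_iff)
      then have "\<forall>i\<in>{..<k}. (cmod (u (Suc i)))^2 = 0"
        by (subst sum_nonneg_eq_0_iff[symmetric]) auto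
      then show ?thesis by simp
    qed
    then show ?thesis
      using n s0 cpa True by (auto simp: Wi cc_def a_def less_Suc_eq_0_disj)
  qed
  show ?thesis using Wc adjW WW col0 by blast
qed

lemma eigvec_unit:
  assumes A: "A \<in> carrier_mat n n" and n: "n = Suc k"
  shows "\<exists>e u. (\<Sum>i<n. u i * cnj (u i)) = 1 \<and> (\<forall>i<n. (\<Sum>j<n. A $$ (i,j) * u j) = e * u i)"
proof -
  obtain as where cp: "char_poly A = (\<Prod>a\<leftarrow>as. [:- a, 1:])" and len: "length as = n"
    using char_poly_factorized[OF A] by blast
  then obtain e rest where as: "as = e # rest" using n by (cases as) auto
  have "poly (char_poly A) e = 0" unfolding cp as by simp
  then have "eigenvalue A e" using eigenvalue_root_char_poly[OF A] by simp
  then obtain v where ev: "eigenvector A v e" unfolding eigenvalue_def by blast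
  then have v: "v \<in> carrier_vec n" and v0: "v \<noteq> 0\<^sub>v n" and Av: "A *\<^sub>v v = e \<cdot>\<^sub>v v"
    unfolding eigenvector_def using A by auto
  obtain i0 where i0: "i0 < n" "v $ i0 \<noteq> 0"
    using v v0 by (metis carrier_vecD eq_vecI index_zero_vec(1) index_zero_vec(2))
  define nv where "nv = (\<Sum>i<n. (cmod (v $ i))^2)"
  have "(cmod (v $ i0))^2 \<le> nv" unfolding nv_def
    using i0 by (intro member_le_sum) auto
  moreover have "(cmod (v $ i0))^2 > 0" using i0 by simp
  ultimately have nvpos: "nv > 0" by linarith
  define c where "c = complex_of_real (sqrt nv)"
  have c0: "c \<noteq> 0" using nvpos by (simp add: c_def)
  have cc: "c * cnj c = complex_of_real nv" using nvpos
    by (simp add: c_def flip: of_real_mult)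
  define u where "u i = v $ i / c" for i
  have "(\<Sum>i<n. u i * cnj (u i)) = (\<Sum>i<n. v $ i * cnj (v $ i)) / (c * cnj c)"
    by (simp add: u_def sum_divide_distrib)
  also have "(\<Sum>i<n. v $ i * cnj (v $ i)) = complex_of_real nv"
    unfolding nv_def of_real_sum by (intro sum.cong refl) (rule complex_norm_square[symmetric])
  finally have un: "(\<Sum>i<n. u i * cnj (u i)) = 1" using cc nvpos by simp
  have eig: "\<forall>i<n. (\<Sum>j<n. A $$ (i,j) * u j) = e * u i"
  proof (intro allI impI)
    fix i assume i: "i < n"
    have "(A *\<^sub>v v) $ i = (e \<cdot>\<^sub>v v) $ i" using Av by simp
    then have "(\<Sum>j<n. A $$ (i,j) * v $ j) = e * v $ i"
      using i A v by (simp add: scalar_prod_def lessThan_atLeast0)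
    then have "(\<Sum>j<n. A $$ (i,j) * v $ j) / c = e * v $ i / c" by simp
    then show "(\<Sum>j<n. A $$ (i,j) * u j) = e * u i"
      by (simp add: u_def sum_divide_distrib)
  qed
  show ?thesis using un eig by blast
qed

declare sum.lessThan_Suc[simp del]

lemma less_Suc_cases: "(i::nat) < Suc k \<Longrightarrow> i = 0 \<or> (\<exists>i'. i = Suc i' \<and> i' < k)"
  by (cases i) auto

lemma sum2_split: "(\<Sum>l<Suc k. \<Sum>m<Suc k. (f l m :: complex)) = f 0 0 + (\<Sum>m<k. f 0 (Suc m)) +
   (\<Sum>l<k. f (Suc l) 0) + (\<Sum>l<k. \<Sum>m<k. f (Suc l) (Suc m))"
  by (simp add: sum.lessThan_Suc_shift sum.distrib)

lemma spectral:
  "(A::complex mat) \<in> carrier_mat n n \<Longrightarrow> mat_adjoint A = A \<Longrightarrow>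
   \<exists>U. U \<in> carrier_mat n n \<and> mat_adjoint U * U = 1\<^sub>m n \<and> U * mat_adjoint U = 1\<^sub>m n \<and>
       (\<forall>i<n. \<forall>j<n. i \<noteq> j \<longrightarrow> (mat_adjoint U * A * U) $$ (i,j) = 0)"
proof (induction n arbitrary: A)
  case 0
  show ?case by (rule exI[of _ "1\<^sub>m 0"]) auto
next
  case (Suc k)
  let ?n = "Suc k"
  have A: "A \<in> carrier_mat ?n ?n" and hA: "mat_adjoint A = A" using Suc.prems by auto
  obtain e u where un: "(\<Sum>i<?n. u i * cnj (u i)) = 1" and eig: "\<forall>i<?n. (\<Sum>j<?n. A $$ (i,j) * u j) = e * u i"
    using eigvec_unit[OF A refl] by blast
  obtain W \<phi> where Wc: "W \<in> carrier_mat ?n ?n" and hW: "mat_adjoint W = W" and WW: "W * W = 1\<^sub>m ?n"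
    and col: "\<forall>i<?n. W $$ (i,0) = \<phi> * u i"
    using householder[OF refl un] by blast
  have AW0: "(\<Sum>m<?n. A $$ (l,m) * W $$ (m,0)) = e * W $$ (l,0)" if l: "l < ?n" for l
  proof -
    have "(\<Sum>m<?n. A $$ (l,m) * W $$ (m,0)) = (\<Sum>m<?n. \<phi> * (A $$ (l,m) * u m))"
      using col by (intro sum.cong refl) simp
    also have "\<dots> = \<phi> * (\<Sum>m<?n. A $$ (l,m) * u m)"
      by (rule sum_distrib_left[symmetric])
    also have "\<dots> = e * W $$ (l,0)" using eig col l by simp
    finally show ?thesis .
  qed
  define A' where "A' = W * A * W"
  have A'c: "A' \<in> carrier_mat ?n ?n" unfolding A'_def using Wc A by auto
  have hA': "mat_adjoint A' = A'"
  proof -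
    have WA: "W * A \<in> carrier_mat ?n ?n" using Wc A by auto
    have "mat_adjoint A' = mat_adjoint W * mat_adjoint (W * A)" unfolding A'_def by (rule adj_mult[OF WA Wc])
    also have "mat_adjoint (W * A) = mat_adjoint A * mat_adjoint W" by (rule adj_mult[OF Wc A])
    finally have "mat_adjoint A' = W * (A * W)" using hW hA by simp
    also have "\<dots> = A'" unfolding A'_def by (rule assoc_mult_mat[symmetric, OF Wc A Wc])
    finally show ?thesis .
  qed
  have A'i0: "A' $$ (i,0) = (if i = 0 then e else 0)" if i: "i < ?n" for i
  proof -
    have "A' $$ (i,0) = (\<Sum>l<?n. \<Sum>m<?n. W $$ (i,l) * A $$ (l,m) * W $$ (m,0))"
      unfolding A'_def by (rule mult3_entry[OF Wc A Wc i]) simp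
    also have "\<dots> = (\<Sum>l<?n. W $$ (i,l) * (\<Sum>m<?n. A $$ (l,m) * W $$ (m,0)))"
      by (simp add: sum_distrib_left ac_simps)
    also have "\<dots> = e * (\<Sum>l<?n. W $$ (i,l) * W $$ (l,0))"
      using AW0 by (simp add: sum_distrib_left ac_simps)
    also have "(\<Sum>l<?n. W $$ (i,l) * W $$ (l,0)) = (W * W) $$ (i,0)"
      by (rule mult_entry[symmetric, OF Wc Wc i]) simp
    also have "\<dots> = (if i = 0 then 1 else 0)" using WW i by simp
    finally show ?thesis by simp
  qed
  have A'0j: "A' $$ (0,Suc j) = 0" if j: "j < k" for j
  proof -
    have "A' $$ (0, Suc j) = mat_adjoint A' $$ (0, Suc j)" using hA' by simp
    also have "\<dots> = cnj (A' $$ (Suc j, 0))" using A'c j by simp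
    also have "\<dots> = 0" using A'i0[of "Suc j"] j by simp
    finally show ?thesis .
  qed
  define A3 where "A3 = mat k k (\<lambda>(i,j). A' $$ (Suc i, Suc j))"
  have A3c: "A3 \<in> carrier_mat k k" unfolding A3_def by simp
  have hA3: "mat_adjoint A3 = A3"
  proof (rule eq_matI)
    fix i j assume "i < dim_row A3" "j < dim_col A3"
    then have i: "i < k" and j: "j < k" using A3c by auto
    have "mat_adjoint A3 $$ (i,j) = cnj (A' $$ (Suc j, Suc i))" using i j by (simp add: A3_def)
    also have "\<dots> = mat_adjoint A' $$ (Suc i, Suc j)" using A'c i j by simp
    also have "\<dots> = A3 $$ (i,j)" using hA' i j by (simp add: A3_def)
    finally show "mat_adjoint A3 $$ (i,j) = A3 $$ (i,j)" .
  qed (use A3c in simp_all)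
  obtain U3 where U3c: "U3 \<in> carrier_mat k k" and U3u: "mat_adjoint U3 * U3 = 1\<^sub>m k"
    and U3d: "\<forall>i<k. \<forall>j<k. i \<noteq> j \<longrightarrow> (mat_adjoint U3 * A3 * U3) $$ (i,j) = 0"
    using Suc.IH[OF A3c hA3] by blast
  define V where "V = mat ?n ?n (\<lambda>(i,j). if i = 0 \<and> j = 0 then 1 else if i = 0 \<or> j = 0 then 0 else U3 $$ (i - 1, j - 1))"
  have Vc: "V \<in> carrier_mat ?n ?n" unfolding V_def by simp
  have V00: "V $$ (0,0) = 1" and V0j: "\<And>j. j < k \<Longrightarrow> V $$ (0, Suc j) = 0"
    and Vi0: "\<And>i. i < k \<Longrightarrow> V $$ (Suc i, 0) = 0"
    and Vij: "\<And>i j. i < k \<Longrightarrow> j < k \<Longrightarrow> V $$ (Suc i, Suc j) = U3 $$ (i, j)"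
    unfolding V_def by auto
  have VV: "mat_adjoint V * V = 1\<^sub>m ?n"
  proof (rule eq_matI)
    fix i j assume "i < dim_row (1\<^sub>m ?n :: complex mat)" "j < dim_col (1\<^sub>m ?n :: complex mat)"
    then have i: "i < ?n" and j: "j < ?n" by auto
    have "(mat_adjoint V * V) $$ (i,j) = (\<Sum>l<?n. mat_adjoint V $$ (i,l) * V $$ (l,j))"
      by (rule mult_entry[OF adj_carrier[OF Vc] Vc i j])
    also have "\<dots> = (\<Sum>l<?n. cnj (V $$ (l,i)) * V $$ (l,j))"
      using Vc i j by (intro sum.cong refl) simp
    also have "\<dots> = cnj (V $$ (0,i)) * V $$ (0,j) + (\<Sum>l<k. cnj (V $$ (Suc l,i)) * V $$ (Suc l,j))"
      by (rule sum.lessThan_Suc_shift)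
    also have "\<dots> = (1\<^sub>m ?n :: complex mat) $$ (i,j)"
    proof -
      consider "i = 0" "j = 0" | j' where "i = 0" "j = Suc j'" "j' < k" | i' where "i = Suc i'" "i' < k" "j = 0"
        | i' j' where "i = Suc i'" "i' < k" "j = Suc j'" "j' < k"
        using less_Suc_cases[OF i] less_Suc_cases[OF j] by blast
      then show ?thesis
      proof cases
        case 1 then show ?thesis using V00 Vi0 by simp
      next
        case 2 then show ?thesis using V00 Vi0 V0j by simp
      next
        case 3 then show ?thesis using V00 Vi0 V0j by simp
      next
        case 4
        have "(\<Sum>l<k. cnj (V $$ (Suc l,i)) * V $$ (Suc l,j)) = (\<Sum>l<k. mat_adjoint U3 $$ (i',l) * U3 $$ (l,j'))"
          using 4 Vij U3c by (intro sum.cong refl) simp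
        also have "\<dots> = (mat_adjoint U3 * U3) $$ (i',j')"
          by (rule mult_entry[symmetric, OF adj_carrier[OF U3c] U3c]) (use 4 in auto)
        also have "\<dots> = (if i' = j' then 1 else 0)" using U3u 4 by simp
        finally show ?thesis using 4 V0j by simp
      qed
    qed
    finally show "(mat_adjoint V * V) $$ (i,j) = (1\<^sub>m ?n :: complex mat) $$ (i,j)" .
  qed (use Vc in simp_all)
  define U where "U = W * V"
  have Uc: "U \<in> carrier_mat ?n ?n" unfolding U_def using Wc Vc by auto
  have adjU: "mat_adjoint U = mat_adjoint V * W"
    unfolding U_def using adj_mult[OF Wc Vc] hW by simp
  have aV: "mat_adjoint V \<in> carrier_mat ?n ?n" using Vc by simp
  have WV: "W * V \<in> carrier_mat ?n ?n" using Wc Vc by auto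
  have aVW: "mat_adjoint V * W \<in> carrier_mat ?n ?n" using aV Wc by auto
  have AWV: "A * (W * V) \<in> carrier_mat ?n ?n" using A WV by auto
  have WA: "W * A \<in> carrier_mat ?n ?n" using Wc A by auto
  have UU: "mat_adjoint U * U = 1\<^sub>m ?n"
  proof -
    have "mat_adjoint U * U = (mat_adjoint V * W) * (W * V)" unfolding adjU unfolding U_def ..
    also have "\<dots> = mat_adjoint V * (W * (W * V))" by (rule assoc_mult_mat[OF aV Wc WV])
    also have "W * (W * V) = (W * W) * V" by (rule assoc_mult_mat[symmetric, OF Wc Wc Vc])
    also have "\<dots> = V" using WW Vc by simp
    finally show ?thesis using VV by simp
  qed
  have UU': "U * mat_adjoint U = 1\<^sub>m ?n"
    by (rule mat_mult_left_right_inverse[OF adj_carrier[OF Uc] Uc UU])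
  have UAU: "mat_adjoint U * A * U = mat_adjoint V * A' * V"
  proof -
    have "mat_adjoint U * A * U = ((mat_adjoint V * W) * A) * (W * V)" unfolding adjU unfolding U_def ..
    also have "\<dots> = (mat_adjoint V * W) * (A * (W * V))" by (rule assoc_mult_mat[OF _ A WV]) (use aVW A in auto)
    also have "\<dots> = mat_adjoint V * (W * (A * (W * V)))" by (rule assoc_mult_mat[OF aV Wc AWV])
    also have "W * (A * (W * V)) = (W * A) * (W * V)" by (rule assoc_mult_mat[symmetric, OF Wc A WV])
    also have "\<dots> = ((W * A) * W) * V" by (rule assoc_mult_mat[symmetric, OF WA Wc Vc])
    also have "mat_adjoint V * (((W * A) * W) * V) = (mat_adjoint V * ((W * A) * W)) * V"
      by (rule assoc_mult_mat[symmetric, OF aV _ Vc]) (use WA Wc in auto)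
    finally show ?thesis unfolding A'_def .
  qed
  have diag: "\<forall>i<?n. \<forall>j<?n. i \<noteq> j \<longrightarrow> (mat_adjoint U * A * U) $$ (i,j) = 0"
  proof (intro allI impI)
    fix i j assume i: "i < ?n" and j: "j < ?n" and ij: "i \<noteq> j"
    have "(mat_adjoint U * A * U) $$ (i,j) = (\<Sum>l<?n. \<Sum>m<?n. mat_adjoint V $$ (i,l) * A' $$ (l,m) * V $$ (m,j))"
      unfolding UAU by (rule mult3_entry[OF adj_carrier[OF Vc] A'c Vc i j])
    also have "\<dots> = (\<Sum>l<?n. \<Sum>m<?n. cnj (V $$ (l,i)) * A' $$ (l,m) * V $$ (m,j))"
      using Vc i j by (intro sum.cong refl) simp
    also have "\<dots> = cnj (V $$ (0,i)) * A' $$ (0,0) * V $$ (0,j) +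
        (\<Sum>m<k. cnj (V $$ (0,i)) * A' $$ (0,Suc m) * V $$ (Suc m,j)) +
        (\<Sum>l<k. cnj (V $$ (Suc l,i)) * A' $$ (Suc l,0) * V $$ (0,j)) +
        (\<Sum>l<k. \<Sum>m<k. cnj (V $$ (Suc l,i)) * A' $$ (Suc l,Suc m) * V $$ (Suc m,j))"
      by (rule sum2_split)
    also have "(\<Sum>m<k. cnj (V $$ (0,i)) * A' $$ (0,Suc m) * V $$ (Suc m,j)) = 0"
      using A'0j by (intro sum.neutral) simp
    also have "(\<Sum>l<k. cnj (V $$ (Suc l,i)) * A' $$ (Suc l,0) * V $$ (0,j)) = 0"
      using A'i0 by (intro sum.neutral) simp
    also have "cnj (V $$ (0,i)) * A' $$ (0,0) * V $$ (0,j) + 0 + 0 +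
        (\<Sum>l<k. \<Sum>m<k. cnj (V $$ (Suc l,i)) * A' $$ (Suc l,Suc m) * V $$ (Suc m,j)) =
        cnj (V $$ (0,i)) * (A' $$ (0,0) * V $$ (0,j)) +
        (\<Sum>l<k. \<Sum>m<k. cnj (V $$ (Suc l,i)) * A' $$ (Suc l,Suc m) * V $$ (Suc m,j))"
      by (simp add: ac_simps)
    also have "\<dots> = 0"
    proof -
      consider j' where "i = 0" "j = Suc j'" "j' < k" | i' where "i = Suc i'" "i' < k" "j = 0"
        | i' j' where "i = Suc i'" "i' < k" "j = Suc j'" "j' < k" "i' \<noteq> j'"
        using less_Suc_cases[OF i] less_Suc_cases[OF j] ij by blast
      then show ?thesis
      proof cases
        case 1 then show ?thesis using V0j Vi0 by simp
      next
        case 2 then show ?thesis using V0j Vi0 by simp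
      next
        case 3
        have "(\<Sum>l<k. \<Sum>m<k. cnj (V $$ (Suc l,i)) * A' $$ (Suc l,Suc m) * V $$ (Suc m,j))
            = (\<Sum>l<k. \<Sum>m<k. mat_adjoint U3 $$ (i',l) * A3 $$ (l,m) * U3 $$ (m,j'))"
          using 3 Vij U3c by (intro sum.cong refl) (simp add: A3_def)
        also have "\<dots> = (mat_adjoint U3 * A3 * U3) $$ (i',j')"
          by (rule mult3_entry[symmetric, OF adj_carrier[OF U3c] A3c U3c]) (use 3 in auto)
        also have "\<dots> = 0" using U3d 3 by simp
        finally show ?thesis using 3 V0j by simp
      qed
    qed
    finally show "(mat_adjoint U * A * U) $$ (i,j) = 0" .
  qed
  show ?case using Uc UU UU' diag by blast
qed

declare sum.lessThan_Suc[simp del]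

lemma order_sum_lin:
  fixes g :: "complex \<Rightarrow> real"
  shows "(\<Sum>z\<in>{x. poly (\<Prod>a\<leftarrow>xs. [:- a, 1:]) x = 0}. real (Polynomial.order z (\<Prod>a\<leftarrow>xs. [:- a, 1:])) * g z)
     = sum_list (map g xs)"
proof (induction xs)
  case Nil then show ?case by simp
next
  case (Cons a xs)
  let ?q = "(\<Prod>a\<leftarrow>xs. [:- a, 1:])"
  let ?p = "[:- a, 1:] * ?q"
  have q0: "?q \<noteq> 0" by (auto simp: prod_list_zero_iff)
  have l0: "[:- a, 1:] \<noteq> (0::complex poly)" by simp
  have p0: "?p \<noteq> 0" using l0 q0 by (simp only: mult_eq_0_iff) blast
  let ?Rq = "{x. poly ?q x = 0}" and ?Rp = "{x. poly ?p x = 0}"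
  have fin: "finite ?Rp" using poly_roots_finite[OF p0] .
  have sub: "?Rq \<subseteq> ?Rp" by auto
  have ain: "a \<in> ?Rp" by simp
  have ord: "Polynomial.order z ?p = (if z = a then 1 else 0) + Polynomial.order z ?q" for z
  proof -
    have "Polynomial.order z ?p = Polynomial.order z [:- a, 1:] + Polynomial.order z ?q" using order_mult[OF p0] .
    moreover have "Polynomial.order z [:- a, 1:] = (if z = a then 1 else 0)"
    proof (cases "z = a")
      case True then show ?thesis using order_power_n_n[of a 1] by simp
    next
      case False
      have "Polynomial.order z [:- a, 1:] = 0" by (rule order_0I) (use False in simp)
      then show ?thesis using False by simp
    qed
    ultimately show ?thesis by simp
  qed
  have "(\<Sum>z\<in>?Rp. real (Polynomial.order z ?p) * g z) = (\<Sum>z\<in>?Rp. (if z = a then g z else 0) + real (Polynomial.order z ?q) * g z)"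
    unfolding ord by (intro sum.cong refl) (simp add: algebra_simps)
  also have "\<dots> = g a + (\<Sum>z\<in>?Rp. real (Polynomial.order z ?q) * g z)"
    using fin ain by (simp add: sum.distrib)
  also have "(\<Sum>z\<in>?Rp. real (Polynomial.order z ?q) * g z) = (\<Sum>z\<in>?Rq. real (Polynomial.order z ?q) * g z)"
  proof (rule sum.mono_neutral_right[OF fin sub])
    show "\<forall>z\<in>?Rp - ?Rq. real (Polynomial.order z ?q) * g z = 0" by (auto simp: order_0I)
  qed
  finally show ?case using Cons.IH by simp
qed

context
  fixes M U :: "complex mat" and N :: nat
  assumes M: "M \<in> carrier_mat N N" and U: "U \<in> carrier_mat N N"
    and uu: "mat_adjoint U * U = 1\<^sub>m N" and uu': "U * mat_adjoint U = 1\<^sub>m N"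
    and dg: "\<forall>i<N. \<forall>j<N. i \<noteq> j \<longrightarrow> (mat_adjoint U * M * U) $$ (i,j) = 0"
begin

definition "DD = mat_adjoint U * M * U"
definition "dd i = DD $$ (i,i)"

lemma DDc: "DD \<in> carrier_mat N N" unfolding DD_def using M U by auto

lemma DD_entry: "l < N \<Longrightarrow> m < N \<Longrightarrow> DD $$ (l,m) = (if l = m then dd l else 0)"
  using dg by (auto simp: dd_def DD_def)

lemma M_decomp: "U * DD * mat_adjoint U = M"
proof -
  have aU: "mat_adjoint U \<in> carrier_mat N N" using U by simp
  have aUM: "mat_adjoint U * M \<in> carrier_mat N N" using aU M by auto
  have "U * DD = U * ((mat_adjoint U * M) * U)" unfolding DD_def ..
  also have "\<dots> = (U * (mat_adjoint U * M)) * U" by (rule assoc_mult_mat[symmetric, OF U aUM U])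
  also have "U * (mat_adjoint U * M) = (U * mat_adjoint U) * M" by (rule assoc_mult_mat[symmetric, OF U aU M])
  also have "\<dots> = M" using uu' M by simp
  finally have "U * DD = M * U" .
  then have "U * DD * mat_adjoint U = M * U * mat_adjoint U" by simp
  also have "\<dots> = M * (U * mat_adjoint U)" by (rule assoc_mult_mat[OF M U aU])
  also have "\<dots> = M" using uu' M by simp
  finally show ?thesis .
qed

lemma M_entry: "j < N \<Longrightarrow> k < N \<Longrightarrow> M $$ (j,k) = (\<Sum>i<N. U $$ (j,i) * dd i * cnj (U $$ (k,i)))"
proof -
  assume j: "j < N" and k: "k < N"
  have "M $$ (j,k) = (U * DD * mat_adjoint U) $$ (j,k)" using M_decomp by simp
  also have "\<dots> = (\<Sum>l<N. \<Sum>m<N. U $$ (j,l) * DD $$ (l,m) * mat_adjoint U $$ (m,k))"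
    by (rule mult3_entry[OF U DDc adj_carrier[OF U] j k])
  also have "\<dots> = (\<Sum>l<N. \<Sum>m<N. if l = m then U $$ (j,l) * dd l * cnj (U $$ (k,l)) else 0)"
    using U k by (intro sum.cong refl) (simp add: DD_entry)
  also have "\<dots> = (\<Sum>i<N. U $$ (j,i) * dd i * cnj (U $$ (k,i)))"
    by simp
  finally show ?thesis .
qed

lemma col_norm: "i < N \<Longrightarrow> (\<Sum>j<N. cnj (U $$ (j,i)) * U $$ (j,i)) = 1"
proof -
  assume i: "i < N"
  have "(mat_adjoint U * U) $$ (i,i) = (\<Sum>j<N. mat_adjoint U $$ (i,j) * U $$ (j,i))"
    by (rule mult_entry[OF adj_carrier[OF U] U i i])
  then show ?thesis using uu i U by simp
qed

lemma row_norm: "y < N \<Longrightarrow> (\<Sum>i<N. U $$ (y,i) * cnj (U $$ (y,i))) = 1"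
proof -
  assume y: "y < N"
  have "(U * mat_adjoint U) $$ (y,y) = (\<Sum>i<N. U $$ (y,i) * mat_adjoint U $$ (i,y))"
    by (rule mult_entry[OF U adj_carrier[OF U] y y])
  then show ?thesis using uu' y U by simp
qed

lemma normsq: "z * cnj z = complex_of_real ((cmod z)^2)"
  by (rule complex_norm_square[symmetric])

lemma U_le1: "j < N \<Longrightarrow> i < N \<Longrightarrow> cmod (U $$ (j,i)) \<le> 1"
proof -
  assume j: "j < N" and i: "i < N"
  have "(\<Sum>j<N. complex_of_real ((cmod (U $$ (j,i)))^2)) = (\<Sum>j<N. cnj (U $$ (j,i)) * U $$ (j,i))"
    by (intro sum.cong refl) (subst complex_norm_square, rule mult.commute)
  also have "\<dots> = 1" using col_norm[OF i] .
  finally have "complex_of_real (\<Sum>j<N. (cmod (U $$ (j,i)))^2) = 1"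
    by (simp only: of_real_sum)
  then have s: "(\<Sum>j<N. (cmod (U $$ (j,i)))^2) = 1"
    by (simp only: of_real_eq_1_iff)
  have "(cmod (U $$ (j,i)))^2 \<le> (\<Sum>j<N. (cmod (U $$ (j,i)))^2)"
    using j by (intro member_le_sum) auto
  then have "(cmod (U $$ (j,i)))^2 \<le> 1" using s by simp
  then show ?thesis by (simp add: power_le_one_iff)
qed

lemma trace_dd: "mtrace M = (\<Sum>i<N. dd i)"
proof -
  have "mtrace M = (\<Sum>j<N. \<Sum>i<N. U $$ (j,i) * dd i * cnj (U $$ (j,i)))"
    using M by (simp add: mtrace_def M_entry)
  also have "\<dots> = (\<Sum>i<N. dd i * (\<Sum>j<N. cnj (U $$ (j,i)) * U $$ (j,i)))"
    by (subst sum.swap) (simp add: sum_distrib_left ac_simps)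
  also have "\<dots> = (\<Sum>i<N. dd i)" using col_norm by simp
  finally show ?thesis .
qed

lemma dd_herm: "mat_adjoint M = M \<Longrightarrow> i < N \<Longrightarrow> dd i = complex_of_real (Re (dd i))"
proof -
  assume h: "mat_adjoint M = M" and i: "i < N"
  have aU: "mat_adjoint U \<in> carrier_mat N N" using U by simp
  have aUM: "mat_adjoint U * M \<in> carrier_mat N N" using aU M by auto
  have "mat_adjoint DD = mat_adjoint U * mat_adjoint (mat_adjoint U * M)"
    unfolding DD_def by (rule adj_mult[OF aUM U])
  also have "mat_adjoint (mat_adjoint U * M) = mat_adjoint M * U"
    using adj_mult[OF aU M] by simp
  finally have "mat_adjoint DD = mat_adjoint U * (M * U)" using h by simp
  also have "\<dots> = DD" unfolding DD_def by (rule assoc_mult_mat[symmetric, OF aU M U])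
  finally have hD: "mat_adjoint DD = DD" .
  have "cnj (dd i) = mat_adjoint DD $$ (i,i)" using DDc i by (simp add: dd_def)
  then have "cnj (dd i) = dd i" using hD by (simp add: dd_def)
  then have "Im (cnj (dd i)) = Im (dd i)" by simp
  then have "Im (dd i) = 0" by simp
  then show ?thesis by (simp add: complex_eq_iff)
qed

lemma trace_norm_eq: "mat_adjoint M = M \<Longrightarrow> trace_norm M = (\<Sum>i<N. \<bar>Re (dd i)\<bar>)"
proof -
  assume h: "mat_adjoint M = M"
  define D2 where "D2 = mat N N (\<lambda>(i,j). if i = j then dd i * dd i else 0)"
  have D2c: "D2 \<in> carrier_mat N N" unfolding D2_def by simp
  have aU: "mat_adjoint U \<in> carrier_mat N N" using U by simp
  have DD2: "DD * DD = D2"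
  proof (rule eq_matI)
    fix i j assume "i < dim_row D2" "j < dim_col D2"
    then have i: "i < N" and j: "j < N" using D2c by auto
    have "(DD * DD) $$ (i,j) = (\<Sum>l<N. DD $$ (i,l) * DD $$ (l,j))" by (rule mult_entry[OF DDc DDc i j])
    also have "\<dots> = (\<Sum>l<N. if i = l then dd i * DD $$ (l,j) else 0)"
      using i by (intro sum.cong refl) (simp add: DD_entry)
    also have "\<dots> = D2 $$ (i,j)" using i j by (simp add: DD_entry D2_def)
    finally show "(DD * DD) $$ (i,j) = D2 $$ (i,j)" .
  qed (use DDc D2c in auto)
  have MM: "mat_adjoint M * M = U * D2 * mat_adjoint U"
  proof -
    have UD: "U * DD \<in> carrier_mat N N" using U DDc by auto
    have UDU: "U * DD * mat_adjoint U \<in> carrier_mat N N" using UD aU by auto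
    have "mat_adjoint M * M = (U * DD * mat_adjoint U) * (U * DD * mat_adjoint U)" using h M_decomp by simp
    also have "\<dots> = (U * DD) * (mat_adjoint U * (U * DD * mat_adjoint U))"
      by (rule assoc_mult_mat[OF UD aU UDU])
    also have "mat_adjoint U * (U * DD * mat_adjoint U) = (mat_adjoint U * (U * DD)) * mat_adjoint U"
      by (rule assoc_mult_mat[symmetric, OF aU UD aU])
    also have "mat_adjoint U * (U * DD) = (mat_adjoint U * U) * DD"
      by (rule assoc_mult_mat[symmetric, OF aU U DDc])
    also have "\<dots> = DD" using uu DDc by simp
    also have "(U * DD) * (DD * mat_adjoint U) = U * (DD * (DD * mat_adjoint U))"
      by (rule assoc_mult_mat[OF U DDc]) (use DDc aU in auto)
    also have "DD * (DD * mat_adjoint U) = (DD * DD) * mat_adjoint U"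
      by (rule assoc_mult_mat[symmetric, OF DDc DDc aU])
    also have "DD * DD = D2" by (rule DD2)
    also have "U * (D2 * mat_adjoint U) = U * D2 * mat_adjoint U"
      by (rule assoc_mult_mat[symmetric, OF U D2c aU])
    finally show ?thesis .
  qed
  have sim: "similar_mat (mat_adjoint M * M) D2"
    by (rule similar_matI[where P=U and Q="mat_adjoint U" and n=N]) (use MM U aU D2c uu uu' M assoc_mult_mat[OF U D2c aU] in auto)
  have ut: "upper_triangular D2" unfolding upper_triangular_def D2_def by auto
  have cp: "char_poly (mat_adjoint M * M) = (\<Prod>a\<leftarrow>diag_mat D2. [:- a, 1:])"
    using char_poly_similar[OF sim] char_poly_upper_triangular[OF D2c ut] by simp
  have "trace_norm M = sum_list (map (\<lambda>z. sqrt (Re z)) (diag_mat D2))"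
    unfolding trace_norm_def Let_def cp by (rule order_sum_lin)
  also have "\<dots> = (\<Sum>i<N. sqrt (Re (dd i * dd i)))"
    using D2c by (simp add: diag_mat_def D2_def sum_list_sum_nth lessThan_atLeast0)
  also have "\<dots> = (\<Sum>i<N. \<bar>Re (dd i)\<bar>)"
  proof (intro sum.cong refl)
    fix i assume "i \<in> {..<N}"
    then have "dd i = complex_of_real (Re (dd i))" using dd_herm[OF h] by simp
    then have "Re (dd i * dd i) = (Re (dd i))^2" by (metis Re_complex_of_real of_real_mult power2_eq_square)
    then show "sqrt (Re (dd i * dd i)) = \<bar>Re (dd i)\<bar>" by simp
  qed
  finally show ?thesis .
qed

end

declare sum.lessThan_Suc[simp del]

context
  fixes M U :: "complex mat" and N :: nat
  assumes M: "M \<in> carrier_mat N N" and U: "U \<in> carrier_mat N N"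
    and uu: "mat_adjoint U * U = 1\<^sub>m N" and uu': "U * mat_adjoint U = 1\<^sub>m N"
    and dg: "\<forall>i<N. \<forall>j<N. i \<noteq> j \<longrightarrow> (mat_adjoint U * M * U) $$ (i,j) = 0"
begin

lemma tn_lower:
  assumes h: "mat_adjoint M = M" and y: "y < N"
  shows "Re (mtrace M) - 2 * Re (M $$ (y,y)) \<le> trace_norm M"
proof -
  define r where "r i = Re (dd M U i)" for i
  define p where "p i = (cmod (U $$ (y,i)))^2" for i
  have ddr: "dd M U i = complex_of_real (r i)" if "i < N" for i
    using dd_herm[OF M U uu uu' dg h that] by (simp add: r_def)
  have tr: "Re (mtrace M) = (\<Sum>i<N. r i)"
    using trace_dd[OF M U uu uu' dg] by (simp add: r_def)
  have "M $$ (y,y) = (\<Sum>i<N. U $$ (y,i) * dd M U i * cnj (U $$ (y,i)))"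
    by (rule M_entry[OF M U uu uu' dg y y])
  also have "\<dots> = (\<Sum>i<N. complex_of_real (p i * r i))"
  proof (intro sum.cong refl)
    fix i assume "i \<in> {..<N}"
    then have "dd M U i = complex_of_real (r i)" using ddr by simp
    moreover have "U $$ (y,i) * cnj (U $$ (y,i)) = complex_of_real (p i)"
      unfolding p_def by (rule complex_norm_square[symmetric])
    ultimately show "U $$ (y,i) * dd M U i * cnj (U $$ (y,i)) = complex_of_real (p i * r i)"
      by (metis (no_types, lifting) mult.assoc mult.commute of_real_mult)
  qed
  finally have Myy: "Re (M $$ (y,y)) = (\<Sum>i<N. p i * r i)" by (simp add: Re_sum)
  have psum: "(\<Sum>i<N. p i) = 1"
  proof -
    have "(\<Sum>i<N. complex_of_real (p i)) = (\<Sum>i<N. U $$ (y,i) * cnj (U $$ (y,i)))"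
      unfolding p_def by (intro sum.cong refl) (rule complex_norm_square)
    also have "\<dots> = 1" by (rule row_norm[OF M U uu uu' dg y])
    finally have "complex_of_real (\<Sum>i<N. p i) = 1" by (simp only: of_real_sum)
    then show ?thesis by (simp only: of_real_eq_1_iff)
  qed
  have p01: "0 \<le> p i \<and> p i \<le> 1" if i: "i < N" for i
  proof -
    have "p i \<le> (\<Sum>i<N. p i)" using i by (intro member_le_sum) (auto simp: p_def)
    then show ?thesis using psum by (simp add: p_def)
  qed
  have "Re (mtrace M) - 2 * Re (M $$ (y,y)) = (\<Sum>i<N. (1 - 2 * p i) * r i)"
    unfolding tr Myy by (simp add: algebra_simps sum_subtractf sum_distrib_left)
  also have "\<dots> \<le> (\<Sum>i<N. \<bar>r i\<bar>)"
  proof (intro sum_mono)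
    fix i assume "i \<in> {..<N}"
    then have "0 \<le> p i" "p i \<le> 1" using p01 by auto
    then have "\<bar>1 - 2 * p i\<bar> \<le> 1" by linarith
    then have "\<bar>(1 - 2 * p i) * r i\<bar> \<le> \<bar>r i\<bar>"
      by (simp add: abs_mult mult_left_le_one_le)
    then show "(1 - 2 * p i) * r i \<le> \<bar>r i\<bar>" by linarith
  qed
  also have "\<dots> = trace_norm M" using trace_norm_eq[OF M U uu uu' dg h] by (simp add: r_def)
  finally show ?thesis .
qed

lemma dd_bound: "i < N \<Longrightarrow> cmod (dd M U i) \<le> (\<Sum>l<N. \<Sum>m<N. cmod (M $$ (l,m)))"
proof -
  assume i: "i < N"
  have "dd M U i = (\<Sum>l<N. \<Sum>m<N. mat_adjoint U $$ (i,l) * M $$ (l,m) * U $$ (m,i))"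
    unfolding dd_def[OF M U uu uu' dg] DD_def[OF M U uu uu' dg] by (rule mult3_entry[OF adj_carrier[OF U] M U i i])
  also have "\<dots> = (\<Sum>l<N. \<Sum>m<N. cnj (U $$ (l,i)) * M $$ (l,m) * U $$ (m,i))"
    using U i by (intro sum.cong refl) simp
  finally have e: "dd M U i = \<dots>" .
  have "cmod (dd M U i) \<le> (\<Sum>l<N. cmod (\<Sum>m<N. cnj (U $$ (l,i)) * M $$ (l,m) * U $$ (m,i)))"
    unfolding e by (rule norm_sum)
  also have "\<dots> \<le> (\<Sum>l<N. \<Sum>m<N. cmod (cnj (U $$ (l,i)) * M $$ (l,m) * U $$ (m,i)))"
    by (intro sum_mono norm_sum)
  also have "\<dots> \<le> (\<Sum>l<N. \<Sum>m<N. cmod (M $$ (l,m)))"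
  proof (intro sum_mono)
    fix l m assume l: "l \<in> {..<N}" and m: "m \<in> {..<N}"
    have a: "cmod (U $$ (l,i)) \<le> 1" using U_le1[OF M U uu uu' dg _ i] l by simp
    have b: "cmod (U $$ (m,i)) \<le> 1" using U_le1[OF M U uu uu' dg _ i] m by simp
    have "cmod (cnj (U $$ (l,i)) * M $$ (l,m) * U $$ (m,i)) = cmod (U $$ (l,i)) * cmod (M $$ (l,m)) * cmod (U $$ (m,i))"
      by (simp add: norm_mult)
    also have "\<dots> \<le> 1 * cmod (M $$ (l,m)) * 1"
      using a b by (intro mult_mono) auto
    finally show "cmod (cnj (U $$ (l,i)) * M $$ (l,m) * U $$ (m,i)) \<le> cmod (M $$ (l,m))" by simp
  qed
  finally show ?thesis .
qed

lemma tn_upper: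
  assumes h: "mat_adjoint M = M"
  shows "trace_norm M \<le> real N * (\<Sum>l<N. \<Sum>m<N. cmod (M $$ (l,m)))"
proof -
  have "trace_norm M = (\<Sum>i<N. \<bar>Re (dd M U i)\<bar>)" by (rule trace_norm_eq[OF M U uu uu' dg h])
  also have "\<dots> \<le> (\<Sum>i<N. (\<Sum>l<N. \<Sum>m<N. cmod (M $$ (l,m))))"
  proof (intro sum_mono)
    fix i assume "i \<in> {..<N}"
    then have "cmod (dd M U i) \<le> (\<Sum>l<N. \<Sum>m<N. cmod (M $$ (l,m)))" using dd_bound by simp
    then show "\<bar>Re (dd M U i)\<bar> \<le> (\<Sum>l<N. \<Sum>m<N. cmod (M $$ (l,m)))"
      using abs_Re_le_cmod[of "dd M U i"] by linarith
  qed
  also have "\<dots> = real N * (\<Sum>l<N. \<Sum>m<N. cmod (M $$ (l,m)))" by simp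
  finally show ?thesis .
qed

lemma psd_dd: "psd N M \<Longrightarrow> i < N \<Longrightarrow> 0 \<le> Re (dd M U i)"
proof -
  assume p: "psd N M" and i: "i < N"
  define v where "v = vec N (\<lambda>l. U $$ (l,i))"
  have v: "v \<in> carrier_vec N" unfolding v_def by simp
  have "dd M U i = (\<Sum>l<N. \<Sum>m<N. mat_adjoint U $$ (i,l) * M $$ (l,m) * U $$ (m,i))"
    unfolding dd_def[OF M U uu uu' dg] DD_def[OF M U uu uu' dg] by (rule mult3_entry[OF adj_carrier[OF U] M U i i])
  also have "\<dots> = (\<Sum>l<N. \<Sum>m<N. cnj (v $ l) * M $$ (l,m) * v $ m)"
    using U i by (intro sum.cong refl) (simp add: v_def)
  finally have "dd M U i = (\<Sum>l<N. \<Sum>m<N. cnj (v $ l) * M $$ (l,m) * v $ m)" .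
  then show ?thesis using p v unfolding psd_def by simp
qed

end

lemma density_entry:
  assumes d: "density N \<rho>" and j: "j < N" and k: "k < N"
  shows "cmod (\<rho> $$ (j,k)) \<le> 1"
proof -
  have p: "psd N \<rho>" and tr: "mtrace \<rho> = 1" using d unfolding density_def by auto
  have rc: "\<rho> \<in> carrier_mat N N" and h: "mat_adjoint \<rho> = \<rho>" using p unfolding psd_def by auto
  obtain U where U: "U \<in> carrier_mat N N" and uu: "mat_adjoint U * U = 1\<^sub>m N" and uu': "U * mat_adjoint U = 1\<^sub>m N"
    and dg: "\<forall>i<N. \<forall>j<N. i \<noteq> j \<longrightarrow> (mat_adjoint U * \<rho> * U) $$ (i,j) = 0"
    using spectral[OF rc h] by blast
  note ctx = rc U uu uu' dg
  define r where "r i = Re (dd \<rho> U i)" for i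
  have ddr: "dd \<rho> U i = complex_of_real (r i)" if "i < N" for i
    using dd_herm[OF ctx h that] by (simp add: r_def)
  have r0: "0 \<le> r i" if "i < N" for i using psd_dd[OF ctx p that] by (simp add: r_def)
  have rs: "(\<Sum>i<N. r i) = 1" using trace_dd[OF ctx] tr by (simp add: r_def flip: Re_sum)
  have "\<rho> $$ (j,k) = (\<Sum>i<N. U $$ (j,i) * dd \<rho> U i * cnj (U $$ (k,i)))" by (rule M_entry[OF ctx j k])
  then have "cmod (\<rho> $$ (j,k)) \<le> (\<Sum>i<N. cmod (U $$ (j,i) * dd \<rho> U i * cnj (U $$ (k,i))))"
    by (simp add: norm_sum)
  also have "\<dots> \<le> (\<Sum>i<N. r i)"
  proof (intro sum_mono)
    fix i assume i: "i \<in> {..<N}"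
    have a: "cmod (U $$ (j,i)) \<le> 1" using U_le1[OF ctx j] i by simp
    have b: "cmod (U $$ (k,i)) \<le> 1" using U_le1[OF ctx k] i by simp
    have "cmod (U $$ (j,i) * dd \<rho> U i * cnj (U $$ (k,i))) = cmod (U $$ (j,i)) * r i * cmod (U $$ (k,i))"
      using ddr r0 i by (simp add: norm_mult)
    also have "\<dots> \<le> 1 * r i * 1" using a b r0 i by (intro mult_mono) auto
    finally show "cmod (U $$ (j,i) * dd \<rho> U i * cnj (U $$ (k,i))) \<le> r i" by simp
  qed
  finally show ?thesis using rs by simp
qed

declare sum.lessThan_Suc[simp del]

lemma LXR_bound:
  assumes L: "(L::complex mat) \<in> carrier_mat a b" and X: "X \<in> carrier_mat b b" and R: "R \<in> carrier_mat b c"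
    and Xb: "\<forall>l<b. \<forall>m<b. cmod (X $$ (l,m)) \<le> 1" and i: "i < a" and j: "j < c"
  shows "cmod ((L * X * R) $$ (i,j)) \<le> (\<Sum>l<b. \<Sum>m<b. cmod (L $$ (i,l)) * cmod (R $$ (m,j)))"
proof -
  have "cmod ((L * X * R) $$ (i,j)) = cmod (\<Sum>l<b. \<Sum>m<b. L $$ (i,l) * X $$ (l,m) * R $$ (m,j))"
    by (simp only: mult3_entry[OF L X R i j])
  also have "\<dots> \<le> (\<Sum>l<b. cmod (\<Sum>m<b. L $$ (i,l) * X $$ (l,m) * R $$ (m,j)))" by (rule norm_sum)
  also have "\<dots> \<le> (\<Sum>l<b. \<Sum>m<b. cmod (L $$ (i,l) * X $$ (l,m) * R $$ (m,j)))" by (intro sum_mono norm_sum)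
  also have "\<dots> \<le> (\<Sum>l<b. \<Sum>m<b. cmod (L $$ (i,l)) * cmod (R $$ (m,j)))"
  proof (intro sum_mono)
    fix l m assume "l \<in> {..<b}" "m \<in> {..<b}"
    then have x: "cmod (X $$ (l,m)) \<le> 1" using Xb by auto
    have "cmod (L $$ (i,l) * X $$ (l,m) * R $$ (m,j)) = cmod (L $$ (i,l)) * cmod (X $$ (l,m)) * cmod (R $$ (m,j))"
      by (simp add: norm_mult)
    also have "\<dots> \<le> cmod (L $$ (i,l)) * 1 * cmod (R $$ (m,j))"
      using x by (intro mult_mono) auto
    finally show "cmod (L $$ (i,l) * X $$ (l,m) * R $$ (m,j)) \<le> cmod (L $$ (i,l)) * cmod (R $$ (m,j))" by simp
  qed
  finally show ?thesis .
qed

lemma mtrace_minus: "A \<in> carrier_mat d d \<Longrightarrow> B \<in> carrier_mat d d \<Longrightarrow> mtrace (A - B) = mtrace A - mtrace B"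
  by (simp add: mtrace_def sum_subtractf)

theorem lemma8:
  fixes n m :: nat and E :: "complex mat \<Rightarrow> complex mat" and \<tau> :: "complex mat"
  assumes chan: "channel (2^n * m) (2^n) E"
    and commute: "\<forall>X \<in> carrier_mat (2^n * m) (2^n * m). E (dephase (2^n * m) X) = dephase (2^n) (E X)"
    and tau: "density m \<tau>"
  shows "chan_dist (2^n) (\<lambda>\<rho>. E (kron \<rho> \<tau>)) (\<lambda>\<rho>. hadamard_pow n * \<rho> * hadamard_pow n)
           \<ge> 1 - 1 / 2^n"
proof -
  define N :: nat where "N = 2^n"
  define H where "H = hadamard_pow n"
  have N0: "N > 0" unfolding N_def by simp
  have Hc: "H \<in> carrier_mat N N" unfolding H_def N_def by (rule hp_carrier)
  have hH: "mat_adjoint H = H" unfolding H_def by (rule hp_adj)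
  have HH: "H * H = 1\<^sub>m N" unfolding H_def N_def by (rule hp_sq)
  have Habs: "\<And>i j. i < N \<Longrightarrow> j < N \<Longrightarrow> H $$ (i,j) * cnj (H $$ (i,j)) = 1 / of_nat N"
    unfolding H_def N_def using hp_abs by simp
  have Hcnj: "\<And>i j. i < N \<Longrightarrow> j < N \<Longrightarrow> cnj (H $$ (i,j)) = H $$ (j,i)"
  proof -
    fix i j assume "i < N" "j < N"
    then have "mat_adjoint H $$ (j,i) = cnj (H $$ (i,j))" using Hc by simp
    then show "cnj (H $$ (i,j)) = H $$ (j,i)" using hH by simp
  qed
  obtain Ks where Kc: "\<forall>K\<in>set Ks. K \<in> carrier_mat N (N * m)"
    and Knorm: "mat_sum_list (N*m) (N*m) (map (\<lambda>K. mat_adjoint K * K) Ks) = 1\<^sub>m (N*m)"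
    and Eeq: "\<forall>X \<in> carrier_mat (N*m) (N*m). E X = mat_sum_list N N (map (\<lambda>K. K * X * mat_adjoint K) Ks)"
    using chan unfolding channel_def N_def by blast
  have comm: "\<And>X. X \<in> carrier_mat (N*m) (N*m) \<Longrightarrow> E (dephase (N*m) X) = dephase N (E X)"
    using commute unfolding N_def by blast
  have taup: "psd m \<tau>" and tautr: "mtrace \<tau> = 1" using tau unfolding density_def by auto
  have tauc: "\<tau> \<in> carrier_mat m m" and htau: "mat_adjoint \<tau> = \<tau>" using taup unfolding psd_def by auto
  have taub: "\<And>a b. a < m \<Longrightarrow> b < m \<Longrightarrow> cmod (\<tau> $$ (a,b)) \<le> 1" using density_entry[OF tau] by blast
  have Ec: "\<And>X. X \<in> carrier_mat (N*m) (N*m) \<Longrightarrow> E X \<in> carrier_mat N N"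
    using Eeq Kc by (auto intro!: msl_carrier kxk_carrier)
  have Etr: "\<And>X. X \<in> carrier_mat (N*m) (N*m) \<Longrightarrow> mtrace (E X) = mtrace X"
    using Eeq kraus_trace[OF Kc Knorm] by simp
  have Eherm: "\<And>X. X \<in> carrier_mat (N*m) (N*m) \<Longrightarrow> mat_adjoint X = X \<Longrightarrow> mat_adjoint (E X) = E X"
    using Eeq kraus_herm[OF Kc] by simp
  define cE where "cE l j = (\<Sum>k<length Ks. \<Sum>a<N*m. \<Sum>b<N*m. cmod ((Ks!k) $$ (l,a)) * cmod ((Ks!k) $$ (j,b)))" for l j
  have Ebound: "\<And>X l j. X \<in> carrier_mat (N*m) (N*m) \<Longrightarrow> (\<forall>a<N*m. \<forall>b<N*m. cmod (X $$ (a,b)) \<le> 1) \<Longrightarrow>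
      l < N \<Longrightarrow> j < N \<Longrightarrow> cmod (E X $$ (l,j)) \<le> cE l j"
    unfolding cE_def using Eeq kraus_bound[OF Kc] by simp
  define \<rho>y where "\<rho>y y = mat N N (\<lambda>(i,j). H $$ (i,y) * cnj (H $$ (j,y)))" for y
  define P where "P y = mat N N (\<lambda>(i,j). if i = y \<and> j = y then 1 else (0::complex))" for y
  define Dm where "Dm = mat N N (\<lambda>(i,j). if i = j then 1 / of_nat N else (0::complex))"
  have \<rho>c: "\<rho>y y \<in> carrier_mat N N" for y unfolding \<rho>y_def by simp
  have \<rho>herm: "mat_adjoint (\<rho>y y) = \<rho>y y" for y
    by (rule eq_matI) (auto simp: \<rho>y_def)
  have \<rho>dens: "density N (\<rho>y y)" if y: "y < N" for y
  proof -
    have psd: "psd N (\<rho>y y)" unfolding psd_def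
    proof (intro conjI ballI)
      fix v :: "complex vec" assume v: "v \<in> carrier_vec N"
      define a where "a = (\<Sum>i<N. cnj (v $ i) * H $$ (i,y))"
      have "(\<Sum>i<N. \<Sum>j<N. cnj (v $ i) * \<rho>y y $$ (i,j) * v $ j) = (\<Sum>i<N. \<Sum>j<N. (cnj (v $ i) * H $$ (i,y)) * (cnj (H $$ (j,y)) * v $ j))"
        by (intro sum.cong refl) (simp add: \<rho>y_def ac_simps)
      also have "\<dots> = a * (\<Sum>j<N. cnj (H $$ (j,y)) * v $ j)" unfolding a_def by (rule sum_product[symmetric])
      also have "(\<Sum>j<N. cnj (H $$ (j,y)) * v $ j) = cnj a" unfolding a_def by (simp add: cnj_sum mult.commute)
      finally have e: "(\<Sum>i<N. \<Sum>j<N. cnj (v $ i) * \<rho>y y $$ (i,j) * v $ j) = a * cnj a" .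
      show "0 \<le> Re (\<Sum>i<N. \<Sum>j<N. cnj (v $ i) * \<rho>y y $$ (i,j) * v $ j)"
        unfolding e by (simp flip: complex_norm_square)
    qed (use \<rho>c \<rho>herm in auto)
    have "mtrace (\<rho>y y) = (\<Sum>i<N. H $$ (i,y) * cnj (H $$ (i,y)))" by (simp add: mtrace_def \<rho>y_def)
    also have "\<dots> = (\<Sum>i<N. 1 / of_nat N)" using Habs y by simp
    also have "\<dots> = 1" using N0 by simp
    finally show ?thesis using psd unfolding density_def by simp
  qed
  have HrH: "H * \<rho>y y * H = P y" if y: "y < N" for y
  proof (rule eq_matI)
    fix i j assume "i < dim_row (P y)" "j < dim_col (P y)"
    then have i: "i < N" and j: "j < N" by (auto simp: P_def)
    have "(H * \<rho>y y * H) $$ (i,j) = (\<Sum>l<N. \<Sum>k<N. H $$ (i,l) * \<rho>y y $$ (l,k) * H $$ (k,j))"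
      by (rule mult3_entry[OF Hc \<rho>c Hc i j])
    also have "\<dots> = (\<Sum>l<N. \<Sum>k<N. (H $$ (i,l) * H $$ (l,y)) * (H $$ (y,k) * H $$ (k,j)))"
      using y by (intro sum.cong refl) (simp add: \<rho>y_def Hcnj ac_simps)
    also have "\<dots> = (\<Sum>l<N. H $$ (i,l) * H $$ (l,y)) * (\<Sum>k<N. H $$ (y,k) * H $$ (k,j))"
      by (simp add: sum_product)
    also have "\<dots> = (H * H) $$ (i,y) * (H * H) $$ (y,j)"
      using mult_entry[OF Hc Hc] i j y by simp
    also have "\<dots> = P y $$ (i,j)" using HH i j y by (simp add: P_def)
    finally show "(H * \<rho>y y * H) $$ (i,j) = P y $$ (i,j)" .
  qed (use Hc in \<open>simp_all add: P_def\<close>)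
  have deph: "dephase N (\<rho>y y) = Dm" if y: "y < N" for y
    by (rule eq_matI) (use Habs y in \<open>auto simp: dephase_def Dm_def \<rho>y_def\<close>)
  define X where "X y = kron (\<rho>y y) \<tau>" for y
  have Xc: "X y \<in> carrier_mat (N*m) (N*m)" for y unfolding X_def by (rule kron_carrier[OF \<rho>c tauc])
  have Xherm: "mat_adjoint (X y) = X y" for y unfolding X_def adj_kron \<rho>herm htau ..
  define Q where "Q = E (kron Dm (dephase m \<tau>))"
  have EXQ: "E (X y) $$ (i,i) = Q $$ (i,i)" if y: "y < N" and i: "i < N" for y i
  proof -
    have "dephase (N*m) (X y) = kron Dm (dephase m \<tau>)"
      unfolding X_def using dephase_kron[OF \<rho>c tauc] deph[OF y] by simp
    then have "Q = E (dephase (N*m) (X y))" unfolding Q_def by simp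
    also have "\<dots> = dephase N (E (X y))" by (rule comm[OF Xc])
    finally have "Q = dephase N (E (X y))" .
    then show ?thesis using i by (simp add: dephase_def)
  qed
  have EXtr: "mtrace (E (X y)) = 1" if y: "y < N" for y
  proof -
    have "mtrace (E (X y)) = mtrace (X y)" by (rule Etr[OF Xc])
    also have "\<dots> = mtrace (\<rho>y y) * mtrace \<tau>" unfolding X_def by (rule mtrace_kron[OF \<rho>c tauc])
    finally show ?thesis using \<rho>dens[OF y] tautr unfolding density_def by simp
  qed
  have Qsum: "(\<Sum>i<N. Re (Q $$ (i,i))) = 1"
  proof -
    have "(\<Sum>i<N. Q $$ (i,i)) = (\<Sum>i<N. E (X 0) $$ (i,i))" using EXQ N0 by simp
    also have "\<dots> = mtrace (E (X 0))" using Ec[OF Xc[of 0]] by (simp add: mtrace_def)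
    also have "\<dots> = 1" using EXtr N0 by simp
    finally show ?thesis by (simp flip: Re_sum)
  qed
  obtain y where y: "y < N" and Qy: "Re (Q $$ (y,y)) \<le> 1 / real N"
  proof (rule ccontr)
    assume "\<not> thesis"
    then have gt: "\<forall>y<N. 1 / real N < Re (Q $$ (y,y))" using that by force
    have "(\<Sum>i<N. 1 / real N) < (\<Sum>i<N. Re (Q $$ (i,i)))"
      using gt N0 by (intro sum_strict_mono) auto
    then show False using Qsum N0 by simp
  qed
  define Mw where "Mw = E (X y) - P y"
  have Pc: "P y \<in> carrier_mat N N" by (simp add: P_def)
  have Mwc: "Mw \<in> carrier_mat N N" unfolding Mw_def using Ec[OF Xc] Pc by auto
  have hP: "mat_adjoint (P y) = P y" by (rule eq_matI) (auto simp: P_def)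
  have hMw: "mat_adjoint Mw = Mw"
    unfolding Mw_def using adj_minus[OF Ec[OF Xc] Pc] Eherm[OF Xc Xherm] hP by simp
  have trMw: "mtrace Mw = 0"
  proof -
    have "mtrace (P y) = 1" using y by (simp add: mtrace_def P_def)
    then show ?thesis unfolding Mw_def using mtrace_minus[OF Ec[OF Xc] Pc] EXtr[OF y] by simp
  qed
  have Mwyy: "Mw $$ (y,y) = Q $$ (y,y) - 1"
    unfolding Mw_def using Ec[OF Xc] Pc y EXQ[OF y y] by (simp add: P_def)
  obtain U where U: "U \<in> carrier_mat N N" and uu: "mat_adjoint U * U = 1\<^sub>m N" and uu': "U * mat_adjoint U = 1\<^sub>m N"
    and dg: "\<forall>i<N. \<forall>j<N. i \<noteq> j \<longrightarrow> (mat_adjoint U * Mw * U) $$ (i,j) = 0"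
    using spectral[OF Mwc hMw] by blast
  have low: "Re (mtrace Mw) - 2 * Re (Mw $$ (y,y)) \<le> trace_norm Mw"
    by (rule tn_lower[OF Mwc U uu uu' dg hMw y])
  then have lowb: "2 - 2 / real N \<le> trace_norm Mw"
    using trMw Mwyy Qy by simp
  define S where "S = {trace_norm (E (kron \<rho> \<tau>) - H * \<rho> * H) / 2 | \<rho>. density N \<rho>}"
  have inS: "trace_norm Mw / 2 \<in> S"
  proof -
    have "Mw = E (kron (\<rho>y y) \<tau>) - H * \<rho>y y * H" unfolding Mw_def X_def HrH[OF y] ..
    then show ?thesis unfolding S_def using \<rho>dens[OF y] by blast
  qed
  define cH where "cH l j = (\<Sum>a<N. \<Sum>b<N. cmod (H $$ (l,a)) * cmod (H $$ (b,j)))" for l j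
  define B where "B = real N * (\<Sum>l<N. \<Sum>j<N. cE l j + cH l j) / 2"
  have bdd: "bdd_above S"
  proof (rule bdd_aboveI[of _ B])
    fix x assume "x \<in> S"
    then obtain \<rho> where x: "x = trace_norm (E (kron \<rho> \<tau>) - H * \<rho> * H) / 2" and d: "density N \<rho>"
      unfolding S_def by blast
    have rp: "psd N \<rho>" using d unfolding density_def by auto
    then have rc: "\<rho> \<in> carrier_mat N N" and hr: "mat_adjoint \<rho> = \<rho>" unfolding psd_def by auto
    have rb: "\<forall>a<N. \<forall>b<N. cmod (\<rho> $$ (a,b)) \<le> 1" using density_entry[OF d] by blast
    have Kr: "kron \<rho> \<tau> \<in> carrier_mat (N*m) (N*m)" by (rule kron_carrier[OF rc tauc])
    have Krb: "\<forall>a<N*m. \<forall>b<N*m. cmod (kron \<rho> \<tau> $$ (a,b)) \<le> 1"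
    proof (intro allI impI)
      fix a b assume a: "a < N*m" and b: "b < N*m"
      note ab = div_mod_bound[OF a] div_mod_bound[OF b]
      have "cmod (kron \<rho> \<tau> $$ (a,b)) = cmod (\<rho> $$ (a div m, b div m)) * cmod (\<tau> $$ (a mod m, b mod m))"
        using rc tauc a b by (simp add: norm_mult)
      also have "\<dots> \<le> 1 * 1" using rb taub ab by (intro mult_mono) auto
      finally show "cmod (kron \<rho> \<tau> $$ (a,b)) \<le> 1" by simp
    qed
    have HrHc: "H * \<rho> * H \<in> carrier_mat N N" using Hc rc by auto
    define Mr where "Mr = E (kron \<rho> \<tau>) - H * \<rho> * H"
    have Mrc: "Mr \<in> carrier_mat N N" unfolding Mr_def by (rule minus_carrier_mat[OF HrHc])
    have hHrH: "mat_adjoint (H * \<rho> * H) = H * \<rho> * H"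
    proof -
      have Hr: "H * \<rho> \<in> carrier_mat N N" using Hc rc by auto
      have "mat_adjoint (H * \<rho> * H) = mat_adjoint H * mat_adjoint (H * \<rho>)" by (rule adj_mult[OF Hr Hc])
      also have "mat_adjoint (H * \<rho>) = mat_adjoint \<rho> * mat_adjoint H" by (rule adj_mult[OF Hc rc])
      finally have "mat_adjoint (H * \<rho> * H) = H * (\<rho> * H)" using hH hr by simp
      also have "\<dots> = H * \<rho> * H" by (rule assoc_mult_mat[symmetric, OF Hc rc Hc])
      finally show ?thesis .
    qed
    have hkr: "mat_adjoint (kron \<rho> \<tau>) = kron \<rho> \<tau>" unfolding adj_kron hr htau ..
    have hMr: "mat_adjoint Mr = Mr"
      unfolding Mr_def using adj_minus[OF Ec[OF Kr] HrHc] Eherm[OF Kr hkr] hHrH by simp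
    obtain V where V: "V \<in> carrier_mat N N" and vv: "mat_adjoint V * V = 1\<^sub>m N" and vv': "V * mat_adjoint V = 1\<^sub>m N"
      and dgv: "\<forall>i<N. \<forall>j<N. i \<noteq> j \<longrightarrow> (mat_adjoint V * Mr * V) $$ (i,j) = 0"
      using spectral[OF Mrc hMr] by blast
    have "trace_norm Mr \<le> real N * (\<Sum>l<N. \<Sum>j<N. cmod (Mr $$ (l,j)))"
      by (rule tn_upper[OF Mrc V vv vv' dgv hMr])
    also have "(\<Sum>l<N. \<Sum>j<N. cmod (Mr $$ (l,j))) \<le> (\<Sum>l<N. \<Sum>j<N. cE l j + cH l j)"
    proof (intro sum_mono)
      fix l j assume l: "l \<in> {..<N}" and j: "j \<in> {..<N}"
      have "Mr $$ (l,j) = E (kron \<rho> \<tau>) $$ (l,j) - (H * \<rho> * H) $$ (l,j)"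
        unfolding Mr_def
      proof (rule index_minus_mat(1))
        show "l < dim_row (H * \<rho> * H)" using carrier_matD(1)[OF HrHc] l by (simp only: lessThan_iff)
        show "j < dim_col (H * \<rho> * H)" using carrier_matD(2)[OF HrHc] j by (simp only: lessThan_iff)
      qed
      then have "cmod (Mr $$ (l,j)) \<le> cmod (E (kron \<rho> \<tau>) $$ (l,j)) + cmod ((H * \<rho> * H) $$ (l,j))"
        by (simp add: norm_triangle_ineq4)
      also have "\<dots> \<le> cE l j + cH l j"
        using Ebound[OF Kr Krb] LXR_bound[OF Hc rc Hc rb] l j unfolding cH_def by (intro add_mono) auto
      finally show "cmod (Mr $$ (l,j)) \<le> cE l j + cH l j" .
    qed
    finally have "trace_norm Mr \<le> real N * (\<Sum>l<N. \<Sum>j<N. cE l j + cH l j)"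
      by (simp add: mult_left_mono)
    then show "x \<le> B" unfolding x B_def Mr_def[symmetric] by simp
  qed
  have "1 - 1 / real N \<le> trace_norm Mw / 2" using lowb by simp
  also have "\<dots> \<le> Sup S" by (rule cSup_upper[OF inS bdd])
  also have "Sup S = chan_dist (2^n) (\<lambda>\<rho>. E (kron \<rho> \<tau>)) (\<lambda>\<rho>. hadamard_pow n * \<rho> * hadamard_pow n)"
    unfolding chan_dist_def S_def N_def H_def by simp
  finally show ?thesis unfolding N_def by simp
qed

end
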